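(* A square complex matrix $A$ is diagonalizable by *congruence (i.e. $R^*AR$ is diagonal for some nonsingular $R$) if and only if both of the following hold: (a) $A$ and $A^*$ have the same null space; (b) the *cosquare $B^{-*}B$ of the regular part $B$ of $A$ is diagonalizable and all its eigenvalues have modulus one.
   Context: The *cosquare of a nonsingular matrix $B$ is $B^{-*}B$, where $B^{-*}=(B^{-1})^*$. Every square complex matrix $A$ is *congruent to a direct sum $B\oplus J_{r_1}(0)\oplus\cdots\oplus J_{r_p}(0)$ with $B$ nonsingular and $J_r(0)$ the $r\times r$ nilpotent Jordan block; this direct sum is uniquely determined up to permutation of the singular summands and replacement of $B$ by a matrix *congruent to it. Such a $B$ is called the regular part of $A$ (its *congruence class, hence the similarity class of its *cosquare, is uniquely determined by $A$). *)

theory Defs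
  imports "Jordan_Normal_Form.Jordan_Normal_Form" "Jordan_Normal_Form.Schur_Decomposition"
    "Jordan_Normal_Form.Matrix_Kernel"
begin

text \<open>Conjugate transpose A^* is mat_adjoint (Schur_Decomposition).\<close>

definition star_congruent :: "complex mat \<Rightarrow> complex mat \<Rightarrow> bool" where
  "star_congruent A C \<longleftrightarrow> (\<exists>S. S \<in> carrier_mat (dim_row C) (dim_row C) \<and> invertible_mat S
      \<and> A = mat_adjoint S * C * S)"

definition diagonalizable_by_star_congruence :: "complex mat \<Rightarrow> bool" where
  "diagonalizable_by_star_congruence A \<longleftrightarrow>
     (\<exists>R. R \<in> carrier_mat (dim_row A) (dim_row A) \<and> invertible_mat R
        \<and> diagonal_mat (mat_adjoint R * A * R))"

definition regular_part :: "complex mat \<Rightarrow> complex mat \<Rightarrow> bool" where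
  "regular_part A B \<longleftrightarrow> square_mat B \<and> invertible_mat B \<and>
     (\<exists>rs. (\<forall>r\<in>set rs. r > 0) \<and>
        star_congruent A (diag_block_mat (B # map (\<lambda>r. jordan_block r 0) rs)))"

definition mat_inv :: "complex mat \<Rightarrow> complex mat" where
  "mat_inv B = (SOME C. inverts_mat B C \<and> inverts_mat C B)"

definition cosquare :: "complex mat \<Rightarrow> complex mat" where
  "cosquare B = mat_adjoint (mat_inv B) * B"

definition diagonalizable_mat :: "complex mat \<Rightarrow> bool" where
  "diagonalizable_mat C \<longleftrightarrow> (\<exists>D. D \<in> carrier_mat (dim_row C) (dim_row C) \<and> diagonal_mat D
      \<and> similar_mat C D)"

end

theory Submission
  imports Defs
begin

lemma adj_def': "mat_adjoint (A :: complex mat) = mat (dim_col A) (dim_row A) (\<lambda>(i,j). cnj (A $$ (j,i)))"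
  unfolding mat_adjoint_def by (rule eq_matI, auto simp: mat_of_rows_def)

lemma adj_index[simp]: "i < dim_col A \<Longrightarrow> j < dim_row A \<Longrightarrow> mat_adjoint (A :: complex mat) $$ (i,j) = cnj (A $$ (j,i))"
  by (simp add: adj_def')

lemma adj_dim[simp]: "dim_row (mat_adjoint (A :: complex mat)) = dim_col A" "dim_col (mat_adjoint A) = dim_row A"
  by (simp_all add: adj_def')

lemma adj_carrier[simp]: "A \<in> carrier_mat n m \<Longrightarrow> mat_adjoint (A :: complex mat) \<in> carrier_mat m n"
  by (metis adj_dim carrier_matD carrier_matI)

lemma adj_adj[simp]: "mat_adjoint (mat_adjoint (A :: complex mat)) = A"
  by (rule eq_matI, auto)

lemma adj_mult: assumes "(A :: complex mat) \<in> carrier_mat n m" "B \<in> carrier_mat m k"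
  shows "mat_adjoint (A * B) = mat_adjoint B * mat_adjoint A"
  using assms by (intro eq_matI) (auto simp: scalar_prod_def cnj_sum mult.commute)

lemma adj_one[simp]: "mat_adjoint (1\<^sub>m n :: complex mat) = 1\<^sub>m n"
  by (rule eq_matI, auto)

lemma adj_zero[simp]: "mat_adjoint (0\<^sub>m n m :: complex mat) = 0\<^sub>m m n"
  by (rule eq_matI, auto)

lemma invertible_adj: assumes "(A :: complex mat) \<in> carrier_mat n n" "invertible_mat A"
  shows "invertible_mat (mat_adjoint A)"
proof -
  from assms obtain B where B: "inverts_mat A B" "inverts_mat B A" unfolding invertible_mat_def by auto
  have Bc: "B \<in> carrier_mat n n"
  proof -
    have 1: "dim_col (A * B) = dim_col (1\<^sub>m (dim_row A) :: complex mat)" using B(1) unfolding inverts_mat_def by metis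
    have 2: "dim_col (B * A) = dim_col (1\<^sub>m (dim_row B) :: complex mat)" using B(2) unfolding inverts_mat_def by metis
    from 1 2 show ?thesis using assms(1) unfolding carrier_mat_def index_mult_mat index_one_mat by auto
  qed
  have "mat_adjoint A * mat_adjoint B = 1\<^sub>m n" using adj_mult[OF Bc assms(1)] B(2) Bc
    unfolding inverts_mat_def by simp
  moreover have "mat_adjoint B * mat_adjoint A = 1\<^sub>m n" using adj_mult[OF assms(1) Bc] B(1) assms(1)
    unfolding inverts_mat_def by simp
  show ?thesis unfolding invertible_mat_def inverts_mat_def
  proof (intro conjI exI[of _ "mat_adjoint B"])
    show "square_mat (mat_adjoint A)" using carrier_matD[OF assms(1)] by simp
    show "mat_adjoint A * mat_adjoint B = 1\<^sub>m (dim_row (mat_adjoint A))"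
      using \<open>mat_adjoint A * mat_adjoint B = 1\<^sub>m n\<close> carrier_matD[OF assms(1)] by (simp add: carrier_matD)
    show "mat_adjoint B * mat_adjoint A = 1\<^sub>m (dim_row (mat_adjoint B))"
      using \<open>mat_adjoint B * mat_adjoint A = 1\<^sub>m n\<close> Bc carrier_matD[OF Bc] by (simp add: carrier_matD)
  qed
qed

lemma inv_iff: assumes "(A :: complex mat) \<in> carrier_mat n n"
  shows "invertible_mat A \<longleftrightarrow> (\<exists>B \<in> carrier_mat n n. A * B = 1\<^sub>m n \<and> B * A = 1\<^sub>m n)"
proof
  assume "invertible_mat A"
  then obtain B where B: "inverts_mat A B" "inverts_mat B A" unfolding invertible_mat_def by auto
  have 1: "dim_col (A * B) = dim_col (1\<^sub>m (dim_row A) :: complex mat)" using B(1) unfolding inverts_mat_def by metis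
  have 2: "dim_col (B * A) = dim_col (1\<^sub>m (dim_row B) :: complex mat)" using B(2) unfolding inverts_mat_def by metis
  from 1 2 have Bc: "B \<in> carrier_mat n n" using assms unfolding carrier_mat_def index_mult_mat index_one_mat by auto
  show "\<exists>B \<in> carrier_mat n n. A * B = 1\<^sub>m n \<and> B * A = 1\<^sub>m n"
    using B Bc assms unfolding inverts_mat_def by (intro bexI[of _ B]) (auto simp: carrier_matD)
next
  assume "\<exists>B \<in> carrier_mat n n. A * B = 1\<^sub>m n \<and> B * A = 1\<^sub>m n"
  then obtain B where "B \<in> carrier_mat n n" "A * B = 1\<^sub>m n" "B * A = 1\<^sub>m n" by auto
  then show "invertible_mat A" using assms unfolding invertible_mat_def inverts_mat_def
    by (intro conjI exI[of _ B]) (auto simp: carrier_matD)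
qed

lemma invI: assumes "(A :: complex mat) \<in> carrier_mat n n" "B \<in> carrier_mat n n" "A * B = 1\<^sub>m n"
  shows "invertible_mat A"
  using inv_iff[OF assms(1)] assms mat_mult_left_right_inverse[OF assms] by auto

lemma inv_mult: assumes "(A :: complex mat) \<in> carrier_mat n n" "B \<in> carrier_mat n n"
  "invertible_mat A" "invertible_mat B"
  shows "invertible_mat (A * B)"
proof -
  obtain A' where A': "A' \<in> carrier_mat n n" "A * A' = 1\<^sub>m n" using inv_iff[OF assms(1)] assms(3) by blast
  obtain B' where B': "B' \<in> carrier_mat n n" "B * B' = 1\<^sub>m n" using inv_iff[OF assms(2)] assms(4) by blast
  have "A * B * (B' * A') = A * (B * (B' * A'))" using assoc_mult_mat[OF mult_carrier_mat[OF assms(1,2)] B'(1) A'(1)] assoc_mult_mat[OF assms(1,2) mult_carrier_mat[OF B'(1) A'(1)]] by simp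
  also have "B * (B' * A') = (B * B') * A'" using assoc_mult_mat[OF assms(2) B'(1) A'(1)] by simp
  also have "A * (B * B' * A') = A * A'" using B' A' by simp
  finally show ?thesis using assms A' B' by (intro invI[of _ n "B' * A'"]) auto
qed

lemma inv_det: assumes "(A :: complex mat) \<in> carrier_mat n n"
  shows "invertible_mat A \<longleftrightarrow> det A \<noteq> 0"
proof
  assume "invertible_mat A"
  then obtain B where B: "B \<in> carrier_mat n n" "A * B = 1\<^sub>m n" using inv_iff[OF assms] by blast
  from arg_cong[OF B(2), of det] show "det A \<noteq> 0" unfolding det_mult[OF assms B(1)] by auto
next
  assume "det A \<noteq> 0"
  from det_non_zero_imp_unit[OF assms this, of "()"]
  obtain B where "B \<in> carrier_mat n n" "A * B = 1\<^sub>m n"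
    unfolding Units_def ring_mat_def by auto
  then show "invertible_mat A" using invI[OF assms] by blast
qed

lemma inv_kernel: assumes "(A :: complex mat) \<in> carrier_mat n n"
  shows "invertible_mat A \<longleftrightarrow> (\<forall>v \<in> carrier_vec n. A *\<^sub>v v = 0\<^sub>v n \<longrightarrow> v = 0\<^sub>v n)"
  unfolding inv_det[OF assms] det_0_iff_vec_prod_zero_field[OF assms] by auto

abbreviation cong :: "complex mat \<Rightarrow> complex mat \<Rightarrow> complex mat" where
  "cong V M \<equiv> mat_adjoint V * M * V"

lemma cong_entry: assumes "V \<in> carrier_mat n n" "M \<in> carrier_mat n n" "a < n" "b < n"
  shows "cong V M $$ (a,b) = (\<Sum>l<n. \<Sum>k<n. cnj (V $$ (l,a)) * M $$ (l,k) * V $$ (k,b))"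
proof -
  have "cong V M $$ (a,b) = (\<Sum>k<n. (\<Sum>l<n. cnj (V $$ (l,a)) * M $$ (l,k)) * V $$ (k,b))"
    using assms by (simp add: scalar_prod_def lessThan_atLeast0)
  also have "\<dots> = (\<Sum>k<n. \<Sum>l<n. cnj (V $$ (l,a)) * M $$ (l,k) * V $$ (k,b))"
    by (simp add: sum_distrib_right)
  also have "\<dots> = (\<Sum>l<n. \<Sum>k<n. cnj (V $$ (l,a)) * M $$ (l,k) * V $$ (k,b))"
    by (rule sum.swap)
  finally show ?thesis .
qed

lemma cong_carrier[simp]: "V \<in> carrier_mat n n \<Longrightarrow> M \<in> carrier_mat n n \<Longrightarrow> cong V M \<in> carrier_mat n n"
  by (metis adj_carrier mult_carrier_mat)

lemma cong_comp: assumes "V1 \<in> carrier_mat n n" "V2 \<in> carrier_mat n n" "M \<in> carrier_mat n n"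
  shows "cong (V1 * V2) M = cong V2 (cong V1 M)"
proof -
  have a1: "mat_adjoint V1 \<in> carrier_mat n n" "mat_adjoint V2 \<in> carrier_mat n n" using assms by auto
  have "cong (V1 * V2) M = mat_adjoint V2 * mat_adjoint V1 * M * (V1 * V2)"
    using adj_mult[OF assms(1,2)] by simp
  also have "\<dots> = mat_adjoint V2 * (mat_adjoint V1 * M * V1) * V2"
    using a1 assms by (simp add: assoc_mult_mat[of _ n n _ n _ n] mult_carrier_mat[of _ n n _ n])
  finally show ?thesis .
qed

definition "classK n lam M \<longleftrightarrow> (\<forall>i<n. \<forall>j<n. M $$ (i,j) = lam j * cnj (M $$ (j,i)))"
definition "unimod n (lam :: nat \<Rightarrow> complex) \<longleftrightarrow> (\<forall>i<n. cmod (lam i) = 1)"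
definition "resp n lam V \<longleftrightarrow> (\<forall>i<n. \<forall>j<n. V $$ (i,j) \<noteq> (0::complex) \<longrightarrow> lam i = lam j)"
definition "offd n U M \<longleftrightarrow> (\<forall>a<n. \<forall>b<n. a \<noteq> b \<longrightarrow> (a \<notin> U \<or> b \<notin> U) \<longrightarrow> M $$ (a,b) = (0::complex))"
definition "idout n U V \<longleftrightarrow> (\<forall>a<n. \<forall>b<n. (a \<notin> U \<or> b \<notin> U) \<longrightarrow> V $$ (a,b) = (if a = b then 1 else (0::complex)))"

lemma unimod_cnj: "cmod (z::complex) = 1 \<Longrightarrow> cnj z * z = 1"
  by (metis complex_norm_square mult.commute of_real_1 power_one complex_mult_cnj)

lemma classK_lam: assumes "classK n lam M" "unimod n lam" "i < n" "j < n" "M $$ (i,j) \<noteq> 0"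
  shows "lam i = lam j"
proof -
  have "M $$ (i,j) = lam j * cnj (lam i * cnj (M $$ (i,j)))"
    using assms(1,3,4) unfolding classK_def by metis
  also have "\<dots> = lam j * cnj (lam i) * M $$ (i,j)" by simp
  finally have "lam j * cnj (lam i) = 1" using assms(5)
    by (metis mult.commute mult_cancel_right1)
  hence "lam j * (cnj (lam i) * lam i) = lam i" by (metis mult.assoc mult_1)
  thus ?thesis using unimod_cnj assms(2,3) unfolding unimod_def by auto
qed

lemma classK_cong: assumes "classK n lam M" "resp n lam V" "V \<in> carrier_mat n n" "M \<in> carrier_mat n n"
  shows "classK n lam (cong V M)"
  unfolding classK_def
proof (intro allI impI)
  fix a b assume ab: "a < n" "b < n"
  have "lam b * cnj (cong V M $$ (b,a)) = lam b * (\<Sum>l<n. \<Sum>k<n. V $$ (l,b) * cnj (M $$ (l,k)) * cnj (V $$ (k,a)))"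
    using cong_entry[OF assms(3,4) ab(2,1)] by (simp add: cnj_sum)
  also have "\<dots> = (\<Sum>l<n. \<Sum>k<n. cnj (V $$ (k,a)) * M $$ (k,l) * V $$ (l,b))"
    unfolding sum_distrib_left
  proof (intro sum.cong refl)
    fix l k assume lk: "l \<in> {..<n}" "k \<in> {..<n}"
    show "lam b * (V $$ (l,b) * cnj (M $$ (l,k)) * cnj (V $$ (k,a))) = cnj (V $$ (k,a)) * M $$ (k,l) * V $$ (l,b)"
    proof (cases "V $$ (l,b) = 0")
      case False
      hence "lam l = lam b" using assms(2) lk ab unfolding resp_def by auto
      moreover have "M $$ (k,l) = lam l * cnj (M $$ (l,k))" using assms(1) lk unfolding classK_def lessThan_iff by blast
      ultimately have e: "M $$ (k,l) = lam b * cnj (M $$ (l,k))" by simp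
      show ?thesis unfolding e by (simp only: mult.assoc mult.commute mult.left_commute)
    qed simp
  qed
  also have "\<dots> = cong V M $$ (a,b)" using cong_entry[OF assms(3,4) ab] by (rule sym[OF trans]) (rule sum.swap)
  finally show "cong V M $$ (a,b) = lam b * cnj (cong V M $$ (b,a))" by simp
qed

lemma resp_mult: assumes "resp n lam V1" "resp n lam V2" "V1 \<in> carrier_mat n n" "V2 \<in> carrier_mat n n"
  shows "resp n lam (V1 * V2)"
  unfolding resp_def
proof (intro allI impI)
  fix i j assume ij: "i < n" "j < n" "(V1 * V2) $$ (i,j) \<noteq> 0"
  hence "(\<Sum>k<n. V1 $$ (i,k) * V2 $$ (k,j)) \<noteq> 0" using assms(3,4) by (simp add: scalar_prod_def lessThan_atLeast0)
  then obtain k where k: "k < n" "V1 $$ (i,k) * V2 $$ (k,j) \<noteq> 0" by (meson lessThan_iff sum.neutral)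
  thus "lam i = lam j" using assms(1,2) ij unfolding resp_def by (metis mult_eq_0_iff)
qed

lemma resp_one: "resp n lam (1\<^sub>m n)" unfolding resp_def by auto

lemma offd_cong: assumes "offd n U M" "idout n U V" "V \<in> carrier_mat n n" "M \<in> carrier_mat n n"
  shows "offd n U (cong V M)"
  unfolding offd_def
proof (intro allI impI)
  fix a b assume ab: "a < n" "b < n" "a \<noteq> b" "a \<notin> U \<or> b \<notin> U"
  have "cong V M $$ (a,b) = (\<Sum>l<n. \<Sum>k<n. cnj (V $$ (l,a)) * M $$ (l,k) * V $$ (k,b))"
    using cong_entry[OF assms(3,4) ab(1,2)] .
  also have "\<dots> = 0"
  proof (intro sum.neutral ballI)
    fix l k assume lk: "l \<in> {..<n}" "k \<in> {..<n}"
    show "cnj (V $$ (l,a)) * M $$ (l,k) * V $$ (k,b) = 0"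
    proof (cases "a \<notin> U")
      case True
      hence "V $$ (l,a) = (if l = a then 1 else 0)" using assms(2) lk ab unfolding idout_def by auto
      moreover have "l = a \<Longrightarrow> k \<noteq> a \<Longrightarrow> M $$ (l,k) = 0" using assms(1) True lk ab unfolding offd_def by auto
      moreover have "k = a \<Longrightarrow> V $$ (k,b) = 0" using assms(2) True lk ab unfolding idout_def by auto
      ultimately show ?thesis by (cases "l = a"; cases "k = a") auto
    next
      case False
      hence nb: "b \<notin> U" using ab by auto
      hence "V $$ (k,b) = (if k = b then 1 else 0)" using assms(2) lk ab unfolding idout_def by auto
      moreover have "k = b \<Longrightarrow> l \<noteq> b \<Longrightarrow> M $$ (l,k) = 0" using assms(1) nb lk ab unfolding offd_def by auto
      moreover have "l = b \<Longrightarrow> V $$ (l,a) = 0" using assms(2) nb lk ab unfolding idout_def by auto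
      ultimately show ?thesis by (cases "l = b"; cases "k = b") auto
    qed
  qed
  finally show "cong V M $$ (a,b) = 0" .
qed

lemma sum_sparse: fixes n :: nat assumes "S \<subseteq> {..<n}" "\<And>k. k < n \<Longrightarrow> k \<notin> S \<Longrightarrow> g k = 0"
  shows "(\<Sum>k<n. g k) = (\<Sum>k\<in>S. g k)"
  by (rule sum.mono_neutral_right) (use assms in auto)

lemma sum_single: fixes n :: nat assumes "i < n" "\<And>k. k < n \<Longrightarrow> k \<noteq> i \<Longrightarrow> g k = 0"
  shows "(\<Sum>k<n. g k) = g i"
  using sum_sparse[of "{i}" n g] assms by auto

lemma sum_pair: fixes n :: nat assumes "i < n" "j < n" "i \<noteq> j" "\<And>k. k < n \<Longrightarrow> k \<noteq> i \<Longrightarrow> k \<noteq> j \<Longrightarrow> g k = 0"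
  shows "(\<Sum>k<n. g k) = g i + g j"
  using sum_sparse[of "{i,j}" n g] assms by auto

lemma mult_vec_entry: "V \<in> carrier_mat n n \<Longrightarrow> v \<in> carrier_vec n \<Longrightarrow> a < n \<Longrightarrow>
  (V *\<^sub>v v) $ a = (\<Sum>b<n. V $$ (a,b) * v $ b)"
  by (simp add: scalar_prod_def lessThan_atLeast0)

lemma rowdev_inv: assumes V: "(V :: complex mat) \<in> carrier_mat n n" and p: "p < n"
  and rows: "\<And>a b. a < n \<Longrightarrow> b < n \<Longrightarrow> a \<noteq> p \<Longrightarrow> V $$ (a,b) = (if a = b then 1 else 0)"
  and pp: "V $$ (p,p) \<noteq> 0"
  shows "invertible_mat V"
  unfolding inv_kernel[OF V]
proof (intro ballI impI)
  fix v :: "complex vec" assume v: "v \<in> carrier_vec n" and Vv: "V *\<^sub>v v = 0\<^sub>v n"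
  have va: "v $ a = 0" if a: "a < n" "a \<noteq> p" for a
  proof -
    have "(V *\<^sub>v v) $ a = (\<Sum>b<n. V $$ (a,b) * v $ b)" using mult_vec_entry[OF V v a(1)] .
    also have "\<dots> = V $$ (a,a) * v $ a" by (rule sum_single) (use a rows in auto)
    also have "\<dots> = v $ a" using rows a by simp
    finally show ?thesis using Vv a by simp
  qed
  have "(V *\<^sub>v v) $ p = (\<Sum>b<n. V $$ (p,b) * v $ b)" using mult_vec_entry[OF V v p] .
  also have "\<dots> = V $$ (p,p) * v $ p" by (rule sum_single) (use p va in auto)
  finally have "v $ p = 0" using Vv p pp by simp
  with va show "v = 0\<^sub>v n" using v by (intro eq_vecI) auto
qed

definition elim_mat :: "nat \<Rightarrow> nat set \<Rightarrow> nat \<Rightarrow> complex mat \<Rightarrow> complex mat" where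
  "elim_mat n U p M = mat n n (\<lambda>(a,b). if a = b then 1 else if a = p \<and> b \<in> U then - (M $$ (p,b) / M $$ (p,p)) else 0)"

lemma elim: assumes M: "M \<in> carrier_mat n n" and K: "classK n lam M" and um: "unimod n lam"
  and off: "offd n U M" and pU: "p \<in> U" and U: "U \<subseteq> {..<n}" and pp: "M $$ (p,p) \<noteq> 0"
  shows "\<exists>V. V \<in> carrier_mat n n \<and> invertible_mat V \<and> resp n lam V \<and> offd n (U - {p}) (cong V M)"
proof -
  define V where "V = elim_mat n U p M"
  have p: "p < n" using pU U by auto
  have Vc: "V \<in> carrier_mat n n" unfolding V_def elim_mat_def by simp
  have Ve: "V $$ (a,b) = (if a = b then 1 else if a = p \<and> b \<in> U then - (M $$ (p,b) / M $$ (p,p)) else 0)"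
    if "a < n" "b < n" for a b using that unfolding V_def elim_mat_def by simp
  have inv: "invertible_mat V" by (rule rowdev_inv[OF Vc p]) (use Ve p in auto)
  have rs: "resp n lam V" unfolding resp_def
  proof (intro allI impI)
    fix i j assume ij: "i < n" "j < n" "V $$ (i,j) \<noteq> 0"
    show "lam i = lam j"
    proof (cases "i = j")
      case False
      hence "i = p" "M $$ (p,j) \<noteq> 0" using ij Ve[OF ij(1,2)] by (auto split: if_splits)
      thus ?thesis using classK_lam[OF K um p ij(2)] by simp
    qed simp
  qed
  have io: "idout n U V" unfolding idout_def using Ve pU by auto
  define M' where "M' = cong V M"
  have M'c: "M' \<in> carrier_mat n n" unfolding M'_def using Vc M by simp
  have K': "classK n lam M'" unfolding M'_def by (rule classK_cong[OF K rs Vc M])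
  have off': "offd n U M'" unfolding M'_def by (rule offd_cong[OF off io Vc M])
  have row: "M' $$ (p,b) = 0" if b: "b < n" "b \<noteq> p" for b
  proof -
    have "M' $$ (p,b) = (\<Sum>l<n. \<Sum>k<n. cnj (V $$ (l,p)) * M $$ (l,k) * V $$ (k,b))"
      unfolding M'_def by (rule cong_entry[OF Vc M p b(1)])
    also have "\<dots> = (\<Sum>k<n. cnj (V $$ (p,p)) * M $$ (p,k) * V $$ (k,b))"
      by (rule sum_single[OF p]) (use Ve p in auto)
    also have "\<dots> = (\<Sum>k<n. M $$ (p,k) * V $$ (k,b))" using Ve p by simp
    also have "\<dots> = M $$ (p,b) * V $$ (b,b) + M $$ (p,p) * V $$ (p,b)"
      by (rule sum_pair[OF b(1) p b(2)]) (use Ve b in auto)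
    also have "\<dots> = 0"
    proof (cases "b \<in> U")
      case True
      thus ?thesis using Ve b p pp by simp
    next
      case False
      hence "M $$ (p,b) = 0" using off b p unfolding offd_def by auto
      thus ?thesis using Ve b p False by simp
    qed
    finally show ?thesis .
  qed
  have col: "M' $$ (a,p) = 0" if a: "a < n" "a \<noteq> p" for a
  proof -
    have "M' $$ (a,p) = lam p * cnj (M' $$ (p,a))" using K' a p unfolding classK_def by blast
    thus ?thesis using row[OF a] by simp
  qed
  have "offd n (U - {p}) M'" unfolding offd_def
  proof (intro allI impI)
    fix a b assume ab: "a < n" "b < n" "a \<noteq> b" "a \<notin> U - {p} \<or> b \<notin> U - {p}"
    show "M' $$ (a,b) = 0"
    proof (cases "a \<notin> U \<or> b \<notin> U")
      case True thus ?thesis using off' ab unfolding offd_def by blast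
    next
      case False
      hence "a = p \<or> b = p" using ab by auto
      thus ?thesis using row col ab by auto
    qed
  qed
  thus ?thesis using Vc inv rs unfolding M'_def by blast
qed

lemma transv: assumes M: "M \<in> carrier_mat n n" and K: "classK n lam M" and um: "unimod n lam"
  and iU: "i \<in> U" and jU: "j \<in> U" and ij: "i \<noteq> j" and U: "U \<subseteq> {..<n}"
  and Mij: "M $$ (i,j) \<noteq> 0" and Mii: "M $$ (i,i) = 0" and Mjj: "M $$ (j,j) = 0"
  shows "\<exists>V. V \<in> carrier_mat n n \<and> invertible_mat V \<and> resp n lam V \<and> idout n U V \<and> cong V M $$ (i,i) \<noteq> 0"
proof -
  have i: "i < n" and j: "j < n" using iU jU U by auto
  define x where "x = (if lam i = -1 then \<i> else 1)"
  define c where "c = x / M $$ (i,j)"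
  define V where "V = mat n n (\<lambda>(a,b). if a = b then 1 else if a = j \<and> b = i then c else (0::complex))"
  have Vc: "V \<in> carrier_mat n n" unfolding V_def by simp
  have Ve: "V $$ (a,b) = (if a = b then 1 else if a = j \<and> b = i then c else 0)"
    if "a < n" "b < n" for a b using that unfolding V_def by simp
  have inv: "invertible_mat V" by (rule rowdev_inv[OF Vc j]) (use Ve j in auto)
  have lij: "lam i = lam j" by (rule classK_lam[OF K um i j Mij])
  have rs: "resp n lam V" unfolding resp_def using Ve lij by (auto split: if_splits)
  have io: "idout n U V" unfolding idout_def using Ve iU jU by auto
  have Mji: "M $$ (j,i) = lam i * cnj (M $$ (i,j))" using K i j unfolding classK_def by blast
  have "cong V M $$ (i,i) = (\<Sum>l<n. \<Sum>k<n. cnj (V $$ (l,i)) * M $$ (l,k) * V $$ (k,i))"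
    by (rule cong_entry[OF Vc M i i])
  also have "\<dots> = (\<Sum>k<n. cnj (V $$ (i,i)) * M $$ (i,k) * V $$ (k,i)) + (\<Sum>k<n. cnj (V $$ (j,i)) * M $$ (j,k) * V $$ (k,i))"
    by (rule sum_pair[OF i j ij]) (use Ve i j in auto)
  also have "(\<Sum>k<n. cnj (V $$ (i,i)) * M $$ (i,k) * V $$ (k,i)) = 
     cnj (V $$ (i,i)) * M $$ (i,i) * V $$ (i,i) + cnj (V $$ (i,i)) * M $$ (i,j) * V $$ (j,i)"
    by (rule sum_pair[OF i j ij]) (use Ve i j in auto)
  also have "(\<Sum>k<n. cnj (V $$ (j,i)) * M $$ (j,k) * V $$ (k,i)) = 
     cnj (V $$ (j,i)) * M $$ (j,i) * V $$ (i,i) + cnj (V $$ (j,i)) * M $$ (j,j) * V $$ (j,i)"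
    by (rule sum_pair[OF i j ij]) (use Ve i j in auto)
  finally have "cong V M $$ (i,i) = M $$ (i,j) * c + cnj c * (lam i * cnj (M $$ (i,j)))"
    using Ve i j ij Mii Mjj Mji by simp
  also have "\<dots> = x + lam i * cnj x" unfolding c_def using Mij by (simp add: field_simps)
  also have "\<dots> \<noteq> 0"
  proof (cases "lam i = -1")
    case True thus ?thesis unfolding x_def by simp
  next
    case False
    hence "1 + lam i \<noteq> 0" by (metis add.commute add_eq_0_iff)
    thus ?thesis using False unfolding x_def by simp
  qed
  finally show ?thesis using Vc inv rs io by blast
qed

lemma offd_empty: "M \<in> carrier_mat n n \<Longrightarrow> offd n {} M \<Longrightarrow> diagonal_mat M"
  unfolding offd_def diagonal_mat_def by auto

lemma cong_one: "M \<in> carrier_mat n n \<Longrightarrow> cong (1\<^sub>m n) M = M" by simp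

lemma engine_aux: "\<forall>U M. finite U \<longrightarrow> card U = m \<longrightarrow> U \<subseteq> {..<n} \<longrightarrow> M \<in> carrier_mat n n \<longrightarrow>
   classK n lam M \<longrightarrow> unimod n lam \<longrightarrow> offd n U M \<longrightarrow>
   (\<exists>V. V \<in> carrier_mat n n \<and> invertible_mat V \<and> resp n lam V \<and> diagonal_mat (cong V M))"
proof (induction m rule: less_induct)
  case (less m)
  show ?case
  proof (intro allI impI)
    fix U M assume fin: "finite U" and cU: "card U = m" and U: "U \<subseteq> {..<n}" and M: "M \<in> carrier_mat n n"
      and K: "classK n lam M" and um: "unimod n lam" and off: "offd n U M"
    show "\<exists>V. V \<in> carrier_mat n n \<and> invertible_mat V \<and> resp n lam V \<and> diagonal_mat (cong V M)"
    proof (cases "\<exists>p\<in>U. M $$ (p,p) \<noteq> 0")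
      case True
      then obtain p where pU: "p \<in> U" and pp: "M $$ (p,p) \<noteq> 0" by blast
      obtain V1 where V1: "V1 \<in> carrier_mat n n" "invertible_mat V1" "resp n lam V1" "offd n (U - {p}) (cong V1 M)"
        using elim[OF M K um off pU U pp] by blast
      have lt: "card (U - {p}) < m" using card_Diff1_less[OF fin pU] cU by simp
      obtain V2 where V2: "V2 \<in> carrier_mat n n" "invertible_mat V2" "resp n lam V2" "diagonal_mat (cong V2 (cong V1 M))"
        using less[rule_format, OF lt, of "U - {p}" "cong V1 M"] fin U M V1 classK_cong[OF K V1(3) V1(1) M] um by auto
      show ?thesis
        using V1 V2 inv_mult resp_mult cong_comp[OF V1(1) V2(1) M] by (intro exI[of _ "V1 * V2"]) auto
    next
      case False
      hence diag0: "\<And>p. p \<in> U \<Longrightarrow> M $$ (p,p) = 0" by blast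
      show ?thesis
      proof (cases "offd n {} M")
        case True
        thus ?thesis using offd_empty[OF M] M inv_iff[of "1\<^sub>m n" n] resp_one
          by (intro exI[of _ "1\<^sub>m n"]) auto
      next
        case False
        then obtain i j where ij: "i < n" "j < n" "i \<noteq> j" "M $$ (i,j) \<noteq> 0" unfolding offd_def by blast
        hence iU: "i \<in> U" and jU: "j \<in> U" using off unfolding offd_def by blast+
        obtain V1 where V1: "V1 \<in> carrier_mat n n" "invertible_mat V1" "resp n lam V1" "idout n U V1"
          "cong V1 M $$ (i,i) \<noteq> 0"
          using transv[OF M K um iU jU ij(3) U ij(4) diag0[OF iU] diag0[OF jU]] by blast
        define M1 where "M1 = cong V1 M"
        have M1: "M1 \<in> carrier_mat n n" "classK n lam M1" "offd n U M1" "M1 $$ (i,i) \<noteq> 0"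
          unfolding M1_def using V1 M classK_cong[OF K V1(3) V1(1) M] offd_cong[OF off V1(4) V1(1) M] by auto
        obtain V2 where V2: "V2 \<in> carrier_mat n n" "invertible_mat V2" "resp n lam V2" "offd n (U - {i}) (cong V2 M1)"
          using elim[OF M1(1,2) um M1(3) iU U M1(4)] by blast
        have lt: "card (U - {i}) < m" using card_Diff1_less[OF fin iU] cU by simp
        obtain V3 where V3: "V3 \<in> carrier_mat n n" "invertible_mat V3" "resp n lam V3" "diagonal_mat (cong V3 (cong V2 M1))"
          using less[rule_format, OF lt, of "U - {i}" "cong V2 M1"] fin U M1 V2 classK_cong[OF M1(2) V2(3) V2(1) M1(1)] um by auto
        have V12: "V1 * V2 \<in> carrier_mat n n" using V1(1) V2(1) by simp
        have "cong (V1 * V2 * V3) M = cong V3 (cong (V1 * V2) M)" by (rule cong_comp[OF V12 V3(1) M])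
        also have "cong (V1 * V2) M = cong V2 M1" unfolding M1_def by (rule cong_comp[OF V1(1) V2(1) M])
        finally have eq: "cong (V1 * V2 * V3) M = cong V3 (cong V2 M1)" .
        have i123: "invertible_mat (V1 * V2 * V3)" using inv_mult[OF V12 V3(1) inv_mult[OF V1(1) V2(1) V1(2) V2(2)] V3(2)] .
        have r123: "resp n lam (V1 * V2 * V3)" using resp_mult[OF resp_mult[OF V1(3) V2(3) V1(1) V2(1)] V3(3) V12 V3(1)] .
        have c123: "V1 * V2 * V3 \<in> carrier_mat n n" using V12 V3(1) by simp
        have d123: "diagonal_mat (cong (V1 * V2 * V3) M)" unfolding eq by (rule V3(4))
        show ?thesis by (rule exI[of _ "V1 * V2 * V3"]) (intro conjI c123 i123 r123 d123)
      qed
    qed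
  qed
qed

lemma engine: assumes "M \<in> carrier_mat n n" "classK n lam M" "unimod n lam"
  shows "\<exists>V. V \<in> carrier_mat n n \<and> invertible_mat V \<and> diagonal_mat (cong V M)"
proof -
  have "offd n {..<n} M" unfolding offd_def by auto
  thus ?thesis using engine_aux[of "card {..<n}" n lam] assms by blast
qed

lemma mat_inv: assumes B: "B \<in> carrier_mat k k" "invertible_mat B"
  shows "mat_inv B \<in> carrier_mat k k" "B * mat_inv B = 1\<^sub>m k" "mat_inv B * B = 1\<^sub>m k"
proof -
  have ex: "\<exists>C. inverts_mat B C \<and> inverts_mat C B" using B(2) unfolding invertible_mat_def by auto
  have C: "inverts_mat B (mat_inv B)" "inverts_mat (mat_inv B) B"
    using someI_ex[OF ex] unfolding mat_inv_def by auto
  have 1: "dim_col (B * mat_inv B) = dim_col (1\<^sub>m (dim_row B) :: complex mat)" using C(1) unfolding inverts_mat_def by metis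
  have 2: "dim_col (mat_inv B * B) = dim_col (1\<^sub>m (dim_row (mat_inv B)) :: complex mat)" using C(2) unfolding inverts_mat_def by metis
  from 1 2 show Cc: "mat_inv B \<in> carrier_mat k k" using B(1) unfolding carrier_mat_def index_mult_mat index_one_mat by auto
  show "B * mat_inv B = 1\<^sub>m k" using C(1) B(1) unfolding inverts_mat_def by (simp add: carrier_matD)
  show "mat_inv B * B = 1\<^sub>m k" using C(2) Cc unfolding inverts_mat_def by (simp add: carrier_matD)
qed

lemma cosq_carrier: "B \<in> carrier_mat k k \<Longrightarrow> invertible_mat B \<Longrightarrow> cosquare B \<in> carrier_mat k k"
  unfolding cosquare_def using mat_inv(1) by (metis adj_carrier mult_carrier_mat)

lemma adj_cosq: assumes B: "B \<in> carrier_mat k k" "invertible_mat B"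
  shows "mat_adjoint B * cosquare B = B"
proof -
  have Bi: "mat_inv B \<in> carrier_mat k k" using mat_inv[OF B] by auto
  have "mat_adjoint B * cosquare B = mat_adjoint B * mat_adjoint (mat_inv B) * B"
    unfolding cosquare_def using Bi B by (simp add: assoc_mult_mat[of _ k k _ k _ k] mult_carrier_mat[of _ k k _ k])
  also have "mat_adjoint B * mat_adjoint (mat_inv B) = mat_adjoint (mat_inv B * B)"
    using adj_mult[OF Bi B(1)] by simp
  also have "\<dots> = 1\<^sub>m k" using mat_inv[OF B] by simp
  finally show ?thesis using B by simp
qed

lemma eigen_of_diag: fixes C D P Q :: "complex mat" assumes sim: "similar_mat_wit C D P Q" and C: "C \<in> carrier_mat k k"
  and D: "diagonal_mat D" and i: "i < k"
  shows "eigenvalue C (D $$ (i,i))"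
proof -
  from sim C have Pc: "P \<in> carrier_mat k k" and Qc: "Q \<in> carrier_mat k k" and Dc: "D \<in> carrier_mat k k"
    and PQ: "P * Q = 1\<^sub>m k" and QP: "Q * P = 1\<^sub>m k" and CPDQ: "C = P * D * Q"
    unfolding similar_mat_wit_def Let_def by (auto simp: carrier_matD)
  define e :: "complex vec" where "e = unit_vec k i"
  have ec: "e \<in> carrier_vec k" unfolding e_def by simp
  have De: "D *\<^sub>v e = D $$ (i,i) \<cdot>\<^sub>v e"
  proof (rule eq_vecI)
    fix a assume "a < dim_vec (D $$ (i,i) \<cdot>\<^sub>v e)"
    hence a: "a < k" unfolding e_def by simp
    have "(D *\<^sub>v e) $ a = (\<Sum>b<k. D $$ (a,b) * e $ b)" by (rule mult_vec_entry[OF Dc ec a])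
    also have "\<dots> = D $$ (a,i) * e $ i" by (rule sum_single[OF i]) (simp add: e_def a i)
    also have "\<dots> = (D $$ (i,i) \<cdot>\<^sub>v e) $ a" using D Dc a i unfolding diagonal_mat_def e_def
      by (cases "a = i") auto
    finally show "(D *\<^sub>v e) $ a = (D $$ (i,i) \<cdot>\<^sub>v e) $ a" .
  qed (use Dc ec in auto)
  define v where "v = P *\<^sub>v e"
  have vc: "v \<in> carrier_vec k" unfolding v_def using Pc ec by simp
  have "Q *\<^sub>v v = e" unfolding v_def using Pc Qc ec QP by (simp add: assoc_mult_mat_vec[symmetric])
  have v0: "v \<noteq> 0\<^sub>v k"
  proof
    assume "v = 0\<^sub>v k"
    hence "(Q *\<^sub>v v) $ i = 0" using Qc i by (simp add: mult_vec_entry)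
    thus False using \<open>Q *\<^sub>v v = e\<close> i unfolding e_def by simp
  qed
  have PD: "P * D \<in> carrier_mat k k" using Pc Dc by simp
  have "C *\<^sub>v v = (P * D) *\<^sub>v (Q *\<^sub>v v)" unfolding CPDQ using assoc_mult_mat_vec[OF PD Qc vc] .
  also have "\<dots> = P *\<^sub>v (D *\<^sub>v (Q *\<^sub>v v))" using assoc_mult_mat_vec[OF Pc Dc] Qc vc by simp
  finally have "C *\<^sub>v v = P *\<^sub>v (D *\<^sub>v (Q *\<^sub>v (P *\<^sub>v e)))" unfolding v_def .
  also have "Q *\<^sub>v (P *\<^sub>v e) = e" using Pc Qc ec QP by (simp add: assoc_mult_mat_vec[symmetric])
  also have "P *\<^sub>v (D *\<^sub>v e) = D $$ (i,i) \<cdot>\<^sub>v v" unfolding De v_def using Pc ec by (simp add: mult_mat_vec)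
  finally show ?thesis unfolding eigenvalue_def eigenvector_def using vc v0 C by (auto simp: carrier_matD)
qed

lemma L_back: assumes B: "B \<in> carrier_mat k k" "invertible_mat B"
  and dg: "diagonalizable_mat (cosquare B)"
  and ev: "\<forall>z. eigenvalue (cosquare B) z \<longrightarrow> cmod z = 1"
  shows "\<exists>R \<in> carrier_mat k k. invertible_mat R \<and> diagonal_mat (cong R B)"
proof -
  define C where "C = cosquare B"
  have Cc: "C \<in> carrier_mat k k" unfolding C_def by (rule cosq_carrier[OF B])
  obtain D where D: "D \<in> carrier_mat k k" "diagonal_mat D" "similar_mat C D"
    using dg Cc unfolding diagonalizable_mat_def C_def by (auto simp: carrier_matD)
  obtain P Q where sim: "similar_mat_wit C D P Q" using D(3) unfolding similar_mat_def by blast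
  from sim Cc have Pc: "P \<in> carrier_mat k k" and Qc: "Q \<in> carrier_mat k k"
    and PQ: "P * Q = 1\<^sub>m k" and QP: "Q * P = 1\<^sub>m k" and CPDQ: "C = P * D * Q"
    unfolding similar_mat_wit_def Let_def by (auto simp: carrier_matD)
  define lam where "lam = (\<lambda>i. D $$ (i,i))"
  have um: "unimod k lam" unfolding unimod_def lam_def
    using eigen_of_diag[OF sim Cc D(2)] ev unfolding C_def by auto
  define B' where "B' = cong P B"
  have B'c: "B' \<in> carrier_mat k k" unfolding B'_def using Pc B by simp
  have aP: "mat_adjoint P \<in> carrier_mat k k" "mat_adjoint B \<in> carrier_mat k k" using Pc B by auto
  have adjB': "mat_adjoint B' = mat_adjoint P * mat_adjoint B * P"
    unfolding B'_def using adj_mult[OF mult_carrier_mat[OF aP(1) B(1)] Pc] adj_mult[OF aP(1) B(1)] aP Pc B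
    by (simp add: assoc_mult_mat[of _ k k _ k _ k] mult_carrier_mat[of _ k k _ k])
  have "B' = mat_adjoint P * (mat_adjoint B * C) * P" unfolding B'_def C_def using adj_cosq[OF B] by simp
  also have "\<dots> = mat_adjoint P * mat_adjoint B * P * D * (Q * P)" unfolding CPDQ
    using aP Pc Qc D(1) by (simp add: assoc_mult_mat[of _ k k _ k _ k] mult_carrier_mat[of _ k k _ k])
  also have "\<dots> = mat_adjoint B' * D" unfolding QP adjB' using aP Pc D(1) by simp
  finally have B'eq: "B' = mat_adjoint B' * D" .
  have K: "classK k lam B'" unfolding classK_def
  proof (intro allI impI)
    fix i j assume ij: "i < k" "j < k"
    have "B' $$ (i,j) = (mat_adjoint B' * D) $$ (i,j)" using B'eq by simp
    also have "\<dots> = (\<Sum>l<k. cnj (B' $$ (l,i)) * D $$ (l,j))"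
      using ij B'c D(1) by (simp add: scalar_prod_def lessThan_atLeast0)
    also have "\<dots> = cnj (B' $$ (j,i)) * D $$ (j,j)"
      by (rule sum_single[OF ij(2)]) (use D ij in \<open>auto simp: diagonal_mat_def\<close>)
    finally show "B' $$ (i,j) = lam j * cnj (B' $$ (j,i))" unfolding lam_def by simp
  qed
  obtain V where V: "V \<in> carrier_mat k k" "invertible_mat V" "diagonal_mat (cong V B')"
    using engine[OF B'c K um] by blast
  have Pinv: "invertible_mat P" by (rule invI[OF Pc Qc PQ])
  have "cong (P * V) B = cong V B'" unfolding B'_def by (rule cong_comp[OF Pc V(1) B(1)])
  thus ?thesis using V Pc Pinv inv_mult[OF Pc V(1) Pinv V(2)] by (intro bexI[of _ "P * V"]) auto
qed

lemma eigen_diag_inv: fixes C D P Q :: "complex mat"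
  assumes sim: "similar_mat_wit C D P Q" and C: "C \<in> carrier_mat k k"
  and D: "diagonal_mat D" and ev: "eigenvalue C z"
  shows "\<exists>i<k. z = D $$ (i,i)"
proof -
  from sim C have Pc: "P \<in> carrier_mat k k" and Qc: "Q \<in> carrier_mat k k" and Dc: "D \<in> carrier_mat k k"
    and PQ: "P * Q = 1\<^sub>m k" and QP: "Q * P = 1\<^sub>m k" and CPDQ: "C = P * D * Q"
    unfolding similar_mat_wit_def Let_def by (auto simp: carrier_matD)
  obtain v where v: "v \<in> carrier_vec k" "v \<noteq> 0\<^sub>v k" "C *\<^sub>v v = z \<cdot>\<^sub>v v"
    using ev C unfolding eigenvalue_def eigenvector_def by (auto simp: carrier_matD)
  define u where "u = Q *\<^sub>v v"
  have uc: "u \<in> carrier_vec k" unfolding u_def using Qc v by simp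
  have Pu: "P *\<^sub>v u = v" unfolding u_def using Pc Qc v PQ by (simp add: assoc_mult_mat_vec[symmetric])
  have u0: "u \<noteq> 0\<^sub>v k" using Pu v(2) Pc by auto
  have QC: "Q * C = D * Q"
  proof -
    have "Q * C = Q * P * D * Q" unfolding CPDQ using Pc Qc Dc
      by (simp add: assoc_mult_mat[of _ k k _ k _ k] mult_carrier_mat[of _ k k _ k])
    thus ?thesis unfolding QP using Dc by simp
  qed
  have "D *\<^sub>v u = (D * Q) *\<^sub>v v" unfolding u_def using Dc Qc v by simp
  also have "\<dots> = Q *\<^sub>v (C *\<^sub>v v)" unfolding QC[symmetric] using Qc C v by simp
  also have "\<dots> = z \<cdot>\<^sub>v u" unfolding v(3) u_def using Qc v by (simp add: mult_mat_vec)
  finally have Du: "D *\<^sub>v u = z \<cdot>\<^sub>v u" .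
  obtain i where i: "i < k" "u $ i \<noteq> 0" using u0 uc by (metis eq_vecI carrier_vecD index_zero_vec)
  have "(D *\<^sub>v u) $ i = (\<Sum>b<k. D $$ (i,b) * u $ b)" by (rule mult_vec_entry[OF Dc uc i(1)])
  also have "\<dots> = D $$ (i,i) * u $ i" by (rule sum_single[OF i(1)]) (use D Dc i in \<open>auto simp: diagonal_mat_def\<close>)
  finally have "D $$ (i,i) * u $ i = z * u $ i" using Du i uc by simp
  thus ?thesis using i by auto
qed

lemma L_fwd: assumes B: "B \<in> carrier_mat k k" "invertible_mat B"
  and R: "R \<in> carrier_mat k k" "invertible_mat R" and dg: "diagonal_mat (cong R B)"
  shows "diagonalizable_mat (cosquare B) \<and> (\<forall>z. eigenvalue (cosquare B) z \<longrightarrow> cmod z = 1)"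
proof -
  define \<Delta> where "\<Delta> = cong R B"
  have aR: "mat_adjoint R \<in> carrier_mat k k" using R by simp
  have \<Delta>c: "\<Delta> \<in> carrier_mat k k" unfolding \<Delta>_def using R B by simp
  have \<Delta>inv: "invertible_mat \<Delta>" unfolding \<Delta>_def
    by (rule inv_mult[OF mult_carrier_mat[OF aR B(1)] R(1) inv_mult[OF aR B(1) invertible_adj[OF R] B(2)] R(2)])
  have dnz: "\<Delta> $$ (i,i) \<noteq> 0" if i: "i < k" for i
  proof
    assume z: "\<Delta> $$ (i,i) = 0"
    define e :: "complex vec" where "e = unit_vec k i"
    have ec: "e \<in> carrier_vec k" unfolding e_def by simp
    have "\<Delta> *\<^sub>v e = 0\<^sub>v k"
    proof (rule eq_vecI)
      fix a assume "a < dim_vec (0\<^sub>v k :: complex vec)"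
      hence a: "a < k" by simp
      have "(\<Delta> *\<^sub>v e) $ a = (\<Sum>b<k. \<Delta> $$ (a,b) * e $ b)" by (rule mult_vec_entry[OF \<Delta>c ec a])
      also have "\<dots> = \<Delta> $$ (a,i) * e $ i" by (rule sum_single[OF i]) (simp add: e_def a i)
      also have "\<dots> = 0" using dg z a i \<Delta>c unfolding \<Delta>_def[symmetric] diagonal_mat_def by (cases "a = i") auto
      finally show "(\<Delta> *\<^sub>v e) $ a = 0\<^sub>v k $ a" using a by simp
    qed (use \<Delta>c in auto)
    moreover have "e \<noteq> 0\<^sub>v k" using i unfolding e_def
      by (metis index_unit_vec(1) index_zero_vec(1) zero_neq_one)
    ultimately show False using \<Delta>inv ec unfolding inv_kernel[OF \<Delta>c] by auto
  qed
  obtain R' where R': "R' \<in> carrier_mat k k" "R * R' = 1\<^sub>m k" "R' * R = 1\<^sub>m k" using inv_iff[OF R(1)] R(2) by blast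
  have aR': "mat_adjoint R' \<in> carrier_mat k k" using R' by simp
  have aRR': "mat_adjoint R' * mat_adjoint R = 1\<^sub>m k" using adj_mult[OF R(1) R'(1)] R'(2) by simp
  have aR'R: "mat_adjoint R * mat_adjoint R' = 1\<^sub>m k" using adj_mult[OF R'(1) R(1)] R'(3) by simp
  define \<Delta>i where "\<Delta>i = mat k k (\<lambda>(i,j). if i = j then 1 / \<Delta> $$ (i,i) else 0)"
  have \<Delta>ic: "\<Delta>i \<in> carrier_mat k k" unfolding \<Delta>i_def by simp
  have \<Delta>\<Delta>i: "\<Delta> * \<Delta>i = 1\<^sub>m k"
  proof (rule eq_matI)
    fix a b assume ab: "a < dim_row (1\<^sub>m k :: complex mat)" "b < dim_col (1\<^sub>m k :: complex mat)"
    hence a: "a < k" and b: "b < k" by auto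
    have "(\<Delta> * \<Delta>i) $$ (a,b) = (\<Sum>l<k. \<Delta> $$ (a,l) * \<Delta>i $$ (l,b))"
      using \<Delta>c \<Delta>ic a b by (simp add: scalar_prod_def lessThan_atLeast0)
    also have "\<dots> = \<Delta> $$ (a,a) * \<Delta>i $$ (a,b)"
      by (rule sum_single[OF a]) (use dg \<Delta>c a in \<open>auto simp: \<Delta>_def[symmetric] diagonal_mat_def\<close>)
    also have "\<dots> = 1\<^sub>m k $$ (a,b)" using dnz a b unfolding \<Delta>i_def by auto
    finally show "(\<Delta> * \<Delta>i) $$ (a,b) = 1\<^sub>m k $$ (a,b)" .
  qed (use \<Delta>c \<Delta>ic in auto)
  have Beq: "B = mat_adjoint R' * \<Delta> * R'"
  proof -
    have "mat_adjoint R' * \<Delta> * R' = (mat_adjoint R' * mat_adjoint R) * B * (R * R')"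
      unfolding \<Delta>_def using aR aR' R(1) R'(1) B by (simp add: assoc_mult_mat[of _ k k _ k _ k] mult_carrier_mat[of _ k k _ k])
    thus ?thesis unfolding aRR' R'(2) using B by simp
  qed
  define X where "X = R * \<Delta>i * mat_adjoint R"
  have Xc: "X \<in> carrier_mat k k" unfolding X_def using R(1) aR \<Delta>ic by (metis mult_carrier_mat)
  have BX: "B * X = 1\<^sub>m k"
  proof -
    have "B * X = mat_adjoint R' * (\<Delta> * (R' * R) * \<Delta>i) * mat_adjoint R"
      unfolding Beq X_def using aR aR' R(1) R'(1) \<Delta>c \<Delta>ic by (simp add: assoc_mult_mat[of _ k k _ k _ k] mult_carrier_mat[of _ k k _ k])
    also have "\<dots> = mat_adjoint R' * mat_adjoint R" unfolding R'(3) \<Delta>\<Delta>i using \<Delta>c \<Delta>ic aR aR'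
      by (simp add: assoc_mult_mat[of _ k k _ k _ k] mult_carrier_mat[of _ k k _ k] \<Delta>\<Delta>i left_mult_one_mat right_mult_one_mat)
    finally show ?thesis using aRR' by simp
  qed
  have minv: "mat_inv B = X"
  proof -
    have Bi: "mat_inv B \<in> carrier_mat k k" "mat_inv B * B = 1\<^sub>m k" using mat_inv[OF B] by auto
    have "mat_inv B = mat_inv B * (B * X)" unfolding BX using Bi by simp
    also have "\<dots> = (mat_inv B * B) * X" using assoc_mult_mat[OF Bi(1) B(1) Xc] by simp
    finally show ?thesis using Bi Xc by simp
  qed
  define D where "D = mat_adjoint \<Delta>i * \<Delta>"
  have Dc: "D \<in> carrier_mat k k" unfolding D_def using \<Delta>ic \<Delta>c by (metis adj_carrier mult_carrier_mat)
  have De: "D $$ (i,j) = (if i = j then cnj (1 / \<Delta> $$ (i,i)) * \<Delta> $$ (i,i) else 0)" if ij: "i < k" "j < k" for i j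
  proof -
    have "D $$ (i,j) = (\<Sum>l<k. cnj (\<Delta>i $$ (l,i)) * \<Delta> $$ (l,j))"
      unfolding D_def using \<Delta>c \<Delta>ic ij by (simp add: scalar_prod_def lessThan_atLeast0)
    also have "\<dots> = cnj (\<Delta>i $$ (i,i)) * \<Delta> $$ (i,j)"
      by (rule sum_single[OF ij(1)]) (use ij in \<open>auto simp: \<Delta>i_def\<close>)
    also have "\<dots> = (if i = j then cnj (1 / \<Delta> $$ (i,i)) * \<Delta> $$ (i,i) else 0)"
      using dg \<Delta>c ij unfolding \<Delta>i_def \<Delta>_def[symmetric] diagonal_mat_def by auto
    finally show ?thesis .
  qed
  have Dd: "diagonal_mat D" using De Dc unfolding diagonal_mat_def by auto
  have cosq: "cosquare B = R * D * R'"
  proof -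
    have "cosquare B = mat_adjoint X * B" unfolding cosquare_def minv ..
    also have "mat_adjoint X = R * mat_adjoint \<Delta>i * mat_adjoint R"
      unfolding X_def using adj_mult[OF mult_carrier_mat[OF R(1) \<Delta>ic] aR] adj_mult[OF R(1) \<Delta>ic] R \<Delta>ic
      by (simp add: assoc_mult_mat[of _ k k _ k _ k] mult_carrier_mat[of _ k k _ k])
    also have "R * mat_adjoint \<Delta>i * mat_adjoint R * B = R * mat_adjoint \<Delta>i * (mat_adjoint R * mat_adjoint R') * \<Delta> * R'"
      unfolding Beq using aR aR' R(1) R'(1) \<Delta>c \<Delta>ic by (simp add: assoc_mult_mat[of _ k k _ k _ k] mult_carrier_mat[of _ k k _ k])
    also have "\<dots> = R * D * R'" unfolding aR'R D_def using aR aR' R(1) R'(1) \<Delta>c \<Delta>ic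
      by (simp add: assoc_mult_mat[of _ k k _ k _ k] mult_carrier_mat[of _ k k _ k])
    finally show ?thesis .
  qed
  have Cc: "cosquare B \<in> carrier_mat k k" by (rule cosq_carrier[OF B])
  have sim: "similar_mat_wit (cosquare B) D R R'"
    unfolding similar_mat_wit_def Let_def using Cc Dc R R' cosq by (auto simp: carrier_matD)
  have "diagonalizable_mat (cosquare B)" unfolding diagonalizable_mat_def
    using Dc Dd sim Cc unfolding similar_mat_def by (auto simp: carrier_matD)
  moreover have "cmod z = 1" if ev: "eigenvalue (cosquare B) z" for z
  proof -
    obtain i where i: "i < k" "z = D $$ (i,i)" using eigen_diag_inv[OF sim Cc Dd ev] by blast
    have "z = cnj (1 / \<Delta> $$ (i,i)) * \<Delta> $$ (i,i)" using De[OF i(1) i(1)] i by simp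
    thus ?thesis using dnz[OF i(1)] by (simp add: norm_mult norm_divide)
  qed
  ultimately show ?thesis by blast
qed

lemma mult_zero_vec[simp]: "(A :: complex mat) \<in> carrier_mat n m \<Longrightarrow> A *\<^sub>v 0\<^sub>v m = 0\<^sub>v n"
  by (intro eq_vecI) (auto simp: scalar_prod_def carrier_matD)

lemma diag_mult_vec: assumes "D \<in> carrier_mat n n" "diagonal_mat D" "u \<in> carrier_vec n" "a < n"
  shows "(D *\<^sub>v u) $ a = D $$ (a,a) * u $ a"
proof -
  have "(D *\<^sub>v u) $ a = (\<Sum>b<n. D $$ (a,b) * u $ b)" by (rule mult_vec_entry[OF assms(1,3,4)])
  also have "\<dots> = D $$ (a,a) * u $ a" by (rule sum_single[OF assms(4)]) (use assms in \<open>auto simp: diagonal_mat_def\<close>)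
  finally show ?thesis .
qed

lemma adj_cong: assumes "W \<in> carrier_mat n n" "M \<in> carrier_mat n n"
  shows "mat_adjoint (cong W M) = cong W (mat_adjoint M)"
proof -
  have aW: "mat_adjoint W \<in> carrier_mat n n" using assms by simp
  show ?thesis using adj_mult[OF mult_carrier_mat[OF aW assms(2)] assms(1)] adj_mult[OF aW assms(2)] assms aW
    by (simp add: assoc_mult_mat[of _ n n _ n _ n] mult_carrier_mat[of _ n n _ n])
qed

lemma diag_adj: "(D :: complex mat) \<in> carrier_mat n n \<Longrightarrow> diagonal_mat D \<Longrightarrow> diagonal_mat (mat_adjoint D)"
  unfolding diagonal_mat_def by (auto simp: carrier_matD)

lemma kersym1: assumes W: "W \<in> carrier_mat n n" "invertible_mat W" and M: "M \<in> carrier_mat n n"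
  and dg: "diagonal_mat (cong W M)" and v: "v \<in> carrier_vec n" and Mv: "M *\<^sub>v v = 0\<^sub>v n"
  shows "mat_adjoint M *\<^sub>v v = 0\<^sub>v n"
proof -
  define \<Delta> where "\<Delta> = cong W M"
  have \<Delta>c: "\<Delta> \<in> carrier_mat n n" unfolding \<Delta>_def using W M by simp
  have aW: "mat_adjoint W \<in> carrier_mat n n" "mat_adjoint M \<in> carrier_mat n n" using W M by auto
  obtain W' where W': "W' \<in> carrier_mat n n" "W * W' = 1\<^sub>m n" using inv_iff[OF W(1)] W(2) by blast
  define u where "u = W' *\<^sub>v v"
  have uc: "u \<in> carrier_vec n" unfolding u_def using W' v by simp
  have Wu: "W *\<^sub>v u = v" unfolding u_def using W' W(1) v by (simp add: assoc_mult_mat_vec[symmetric])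
  have "\<Delta> *\<^sub>v u = mat_adjoint W *\<^sub>v (M *\<^sub>v (W *\<^sub>v u))" unfolding \<Delta>_def using aW W M uc
    by (simp add: assoc_mult_mat_vec[of _ n n _ n] mult_carrier_mat[of _ n n _ n])
  also have "\<dots> = 0\<^sub>v n" unfolding Wu Mv using aW by simp
  finally have \<Delta>u: "\<Delta> *\<^sub>v u = 0\<^sub>v n" .
  have "mat_adjoint \<Delta> *\<^sub>v u = 0\<^sub>v n"
  proof (rule eq_vecI)
    fix a assume "a < dim_vec (0\<^sub>v n :: complex vec)"
    hence a: "a < n" by simp
    have "\<Delta> $$ (a,a) * u $ a = 0" using diag_mult_vec[OF \<Delta>c dg[folded \<Delta>_def] uc a] \<Delta>u a by simp
    hence "cnj (\<Delta> $$ (a,a)) * u $ a = 0" by auto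
    thus "(mat_adjoint \<Delta> *\<^sub>v u) $ a = 0\<^sub>v n $ a"
      using diag_mult_vec[OF adj_carrier[OF \<Delta>c] diag_adj[OF \<Delta>c dg[folded \<Delta>_def]] uc a] a \<Delta>c by simp
  qed (use \<Delta>c in simp)
  moreover have "mat_adjoint \<Delta> *\<^sub>v u = mat_adjoint W *\<^sub>v (mat_adjoint M *\<^sub>v v)"
    unfolding \<Delta>_def adj_cong[OF W(1) M] Wu[symmetric] using aW W M uc
    by (simp add: assoc_mult_mat_vec[of _ n n _ n] mult_carrier_mat[of _ n n _ n])
  ultimately have "mat_adjoint W *\<^sub>v (mat_adjoint M *\<^sub>v v) = 0\<^sub>v n" by simp
  thus ?thesis using invertible_adj[OF W] aW v unfolding inv_kernel[OF aW(1)] by simp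
qed

lemma kersym: assumes W: "W \<in> carrier_mat n n" "invertible_mat W" and M: "M \<in> carrier_mat n n"
  and dg: "diagonal_mat (cong W M)" and v: "v \<in> carrier_vec n"
  shows "M *\<^sub>v v = 0\<^sub>v n \<longleftrightarrow> mat_adjoint M *\<^sub>v v = 0\<^sub>v n"
proof
  show "M *\<^sub>v v = 0\<^sub>v n \<Longrightarrow> mat_adjoint M *\<^sub>v v = 0\<^sub>v n" using kersym1[OF W M dg v] .
  have dg': "diagonal_mat (cong W (mat_adjoint M))" unfolding adj_cong[OF W(1) M, symmetric]
    using diag_adj[OF cong_carrier[OF W(1) M] dg] .
  show "mat_adjoint M *\<^sub>v v = 0\<^sub>v n \<Longrightarrow> M *\<^sub>v v = 0\<^sub>v n"
    using kersym1[OF W adj_carrier[OF M] dg' v] by simp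
qed

lemma sum_sq_zero: fixes x :: "nat \<Rightarrow> complex"
  assumes "(\<Sum>b<m. cnj (x b) * x b) = 0" "b < m" shows "x b = 0"
proof -
  have eq: "cnj (x b) * x b = complex_of_real ((cmod (x b))\<^sup>2)" for b
    by (metis complex_norm_square mult.commute)
  have "complex_of_real (\<Sum>b<m. (cmod (x b))\<^sup>2) = 0" using assms(1) unfolding eq of_real_sum by simp
  hence "(\<Sum>b<m. (cmod (x b))\<^sup>2) = 0" by (rule iffD1[OF of_real_eq_0_iff])
  hence "(cmod (x b))\<^sup>2 = 0" using assms(2) by (subst (asm) sum_nonneg_eq_0_iff) auto
  thus ?thesis by simp
qed

lemma strict_upper_zero: assumes N: "(N :: complex mat) \<in> carrier_mat m m"
  and su: "\<And>i j. i < m \<Longrightarrow> j < m \<Longrightarrow> j \<le> i \<Longrightarrow> N $$ (i,j) = 0"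
  and ks: "\<And>v. v \<in> carrier_vec m \<Longrightarrow> N *\<^sub>v v = 0\<^sub>v m \<Longrightarrow> mat_adjoint N *\<^sub>v v = 0\<^sub>v m"
  shows "N = 0\<^sub>m m m"
proof -
  have main: "\<forall>i<m. N $$ (i,j) = 0" if "j < m" for j
    using that
  proof (induction j rule: less_induct)
    case (less j)
    define w where "w = col N j"
    have wc: "w \<in> carrier_vec m" unfolding w_def using N by (simp add: carrier_vecI carrier_matD)
    have we: "w $ b = N $$ (b,j)" if "b < m" for b unfolding w_def using N that less.prems by simp
    have "N *\<^sub>v w = 0\<^sub>v m"
    proof (rule eq_vecI)
      fix a assume "a < dim_vec (0\<^sub>v m :: complex vec)"
      hence a: "a < m" by simp
      have "(N *\<^sub>v w) $ a = (\<Sum>b<m. N $$ (a,b) * w $ b)" by (rule mult_vec_entry[OF N wc a])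
      also have "\<dots> = 0"
      proof (rule sum.neutral, intro ballI)
        fix b assume b: "b \<in> {..<m}"
        show "N $$ (a,b) * w $ b = 0"
        proof (cases "b < j")
          case True thus ?thesis using less.IH[of b] b a by auto
        next
          case False thus ?thesis using su[of b j] we b less.prems by auto
        qed
      qed
      finally show "(N *\<^sub>v w) $ a = 0\<^sub>v m $ a" using a by simp
    qed (use N in simp)
    hence "mat_adjoint N *\<^sub>v w = 0\<^sub>v m" using ks wc by blast
    hence "(mat_adjoint N *\<^sub>v w) $ j = 0" using less.prems by simp
    moreover have "(mat_adjoint N *\<^sub>v w) $ j = (\<Sum>b<m. cnj (N $$ (b,j)) * N $$ (b,j))"
      using mult_vec_entry[OF adj_carrier[OF N] wc less.prems] less.prems N we by (simp add: carrier_matD)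
    ultimately have z: "(\<Sum>b<m. cnj (N $$ (b,j)) * N $$ (b,j)) = 0" by simp
    show ?case using sum_sq_zero[of "\<lambda>b. N $$ (b,j)", OF z] by blast
  qed
  show ?thesis using main N by (intro eq_matI) auto
qed

lemma dim_le: assumes X: "(X :: complex mat) \<in> carrier_mat a b" and Y: "Y \<in> carrier_mat b a"
  and XY: "X * Y = 1\<^sub>m a" shows "a \<le> b"
proof (rule ccontr)
  assume "\<not> a \<le> b" hence ba: "b < a" by simp
  define X' where "X' = mat a a (\<lambda>(i,j). if j < b then X $$ (i,j) else 0)"
  define Y' where "Y' = mat a a (\<lambda>(i,j). if i < b then Y $$ (i,j) else 0)"
  have X'c: "X' \<in> carrier_mat a a" and Y'c: "Y' \<in> carrier_mat a a" unfolding X'_def Y'_def by auto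
  have "X' * Y' = 1\<^sub>m a"
  proof (rule eq_matI)
    fix i j assume "i < dim_row (1\<^sub>m a :: complex mat)" "j < dim_col (1\<^sub>m a :: complex mat)"
    hence ij: "i < a" "j < a" by auto
    have "(X' * Y') $$ (i,j) = (\<Sum>l<a. X' $$ (i,l) * Y' $$ (l,j))"
      using X'c Y'c ij by (simp add: scalar_prod_def lessThan_atLeast0)
    also have "\<dots> = (\<Sum>l\<in>{..<b}. X' $$ (i,l) * Y' $$ (l,j))"
      by (rule sum_sparse) (use ba ij in \<open>auto simp: X'_def\<close>)
    also have "\<dots> = (\<Sum>l<b. X $$ (i,l) * Y $$ (l,j))"
      by (rule sum.cong) (use ba ij in \<open>auto simp: X'_def Y'_def\<close>)
    also have "\<dots> = (X * Y) $$ (i,j)" using X Y ij by (simp add: scalar_prod_def lessThan_atLeast0)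
    finally show "(X' * Y') $$ (i,j) = 1\<^sub>m a $$ (i,j)" using XY by simp
  qed (use X'c Y'c in auto)
  hence inv: "invertible_mat X'" by (rule invI[OF X'c Y'c])
  define e :: "complex vec" where "e = unit_vec a (a - 1)"
  have ec: "e \<in> carrier_vec a" unfolding e_def by simp
  have a1: "a - 1 < a" using ba by simp
  have "X' *\<^sub>v e = 0\<^sub>v a"
  proof (rule eq_vecI)
    fix i assume "i < dim_vec (0\<^sub>v a :: complex vec)" hence i: "i < a" by simp
    have "(X' *\<^sub>v e) $ i = (\<Sum>l<a. X' $$ (i,l) * e $ l)" by (rule mult_vec_entry[OF X'c ec i])
    also have "\<dots> = X' $$ (i, a - 1) * e $ (a - 1)" by (rule sum_single[OF a1]) (simp add: e_def a1)
    also have "\<dots> = 0" using ba i unfolding X'_def by simp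
    finally show "(X' *\<^sub>v e) $ i = 0\<^sub>v a $ i" using i by simp
  qed (use X'c in simp)
  moreover have "e \<noteq> 0\<^sub>v a" using a1 unfolding e_def by (metis index_unit_vec(1) index_zero_vec(1) zero_neq_one)
  ultimately show False using inv ec unfolding inv_kernel[OF X'c] by auto
qed

lemma jdbm: "diag_block_mat (map (\<lambda>r. jordan_block r (0::complex)) rs) \<in> carrier_mat (sum_list rs) (sum_list rs) \<and>
  (\<forall>i j. i < sum_list rs \<longrightarrow> j < sum_list rs \<longrightarrow> j \<le> i \<longrightarrow> diag_block_mat (map (\<lambda>r. jordan_block r (0::complex)) rs) $$ (i,j) = 0)"
proof (induction rs)
  case Nil thus ?case by simp
next
  case (Cons r rs)
  define D where "D = diag_block_mat (map (\<lambda>r. jordan_block r (0::complex)) rs)"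
  have Dc: "D \<in> carrier_mat (sum_list rs) (sum_list rs)" using Cons.IH unfolding D_def by blast
  have Dz: "\<And>i j. i < sum_list rs \<Longrightarrow> j < sum_list rs \<Longrightarrow> j \<le> i \<Longrightarrow> D $$ (i,j) = 0"
    using Cons.IH unfolding D_def by blast
  have eq: "diag_block_mat (map (\<lambda>r. jordan_block r (0::complex)) (r # rs)) =
    four_block_mat (jordan_block r 0) (0\<^sub>m r (sum_list rs)) (0\<^sub>m (sum_list rs) r) D"
    using Dc unfolding D_def by (simp add: Let_def carrier_matD)
  show ?case unfolding eq
  proof (intro conjI allI impI)
    show "four_block_mat (jordan_block r 0) (0\<^sub>m r (sum_list rs)) (0\<^sub>m (sum_list rs) r) D \<in> carrier_mat (sum_list (r # rs)) (sum_list (r # rs))"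
      using Dc by simp
    fix i j assume ij: "i < sum_list (r # rs)" "j < sum_list (r # rs)" "j \<le> i"
    show "four_block_mat (jordan_block r 0) (0\<^sub>m r (sum_list rs)) (0\<^sub>m (sum_list rs) r) D $$ (i,j) = 0"
      using ij Dc Dz[of "i - r" "j - r"] by (auto simp: carrier_matD)
  qed
qed

lemma jdbm_zero: "diag_block_mat (map (\<lambda>r. jordan_block r (0::complex)) (replicate m 1)) = 0\<^sub>m m m"
proof (induction m)
  case 0 thus ?case by simp
next
  case (Suc m)
  have j1: "jordan_block 1 (0::complex) = 0\<^sub>m 1 1" by (rule eq_matI) auto
  show ?case using Suc j1 by (simp add: Let_def)
qed

lemma dbm_cons: "diag_block_mat (B # As) = four_block_mat B (0\<^sub>m (dim_row B) (dim_col (diag_block_mat As)))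
   (0\<^sub>m (dim_row (diag_block_mat As)) (dim_col B)) (diag_block_mat As)"
  by (simp add: Let_def)

lemma adj_four_block: assumes "(B :: complex mat) \<in> carrier_mat k k" "N \<in> carrier_mat m m"
  shows "mat_adjoint (four_block_mat B (0\<^sub>m k m) (0\<^sub>m m k) N) = four_block_mat (mat_adjoint B) (0\<^sub>m k m) (0\<^sub>m m k) (mat_adjoint N)"
  using assms by (intro eq_matI) (auto simp: carrier_matD)

lemma append_zero_vec: "0\<^sub>v k @\<^sub>v 0\<^sub>v m = (0\<^sub>v (k + m) :: complex vec)"
  by (intro eq_vecI) auto

lemma cong_entry2: assumes "(V :: complex mat) \<in> carrier_mat n q" "M \<in> carrier_mat n n" "a < q" "b < q"
  shows "cong V M $$ (a,b) = (\<Sum>l<n. \<Sum>k<n. cnj (V $$ (l,a)) * M $$ (l,k) * V $$ (k,b))"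
proof -
  have "cong V M $$ (a,b) = (\<Sum>k<n. (\<Sum>l<n. cnj (V $$ (l,a)) * M $$ (l,k)) * V $$ (k,b))"
    using assms by (simp add: scalar_prod_def lessThan_atLeast0)
  also have "\<dots> = (\<Sum>k<n. \<Sum>l<n. cnj (V $$ (l,a)) * M $$ (l,k) * V $$ (k,b))"
    by (simp add: sum_distrib_right)
  also have "\<dots> = (\<Sum>l<n. \<Sum>k<n. cnj (V $$ (l,a)) * M $$ (l,k) * V $$ (k,b))"
    by (rule sum.swap)
  finally show ?thesis .
qed

lemma select: assumes B: "B \<in> carrier_mat k k" "invertible_mat B"
  and W: "W \<in> carrier_mat n n" "invertible_mat W" and kn: "k \<le> n"
  and G: "G = mat n n (\<lambda>(i,j). if i < k \<and> j < k then B $$ (i,j) else 0)"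
  and dg: "diagonal_mat (cong W G)"
  shows "\<exists>U \<in> carrier_mat k k. invertible_mat U \<and> diagonal_mat (cong U B)"
proof -
  have Gc: "G \<in> carrier_mat n n" unfolding G by simp
  define \<Delta> where "\<Delta> = cong W G"
  have \<Delta>c: "\<Delta> \<in> carrier_mat n n" unfolding \<Delta>_def using W Gc by simp
  have dgD: "diagonal_mat \<Delta>" using dg unfolding \<Delta>_def .
  obtain T where T: "T \<in> carrier_mat n n" "W * T = 1\<^sub>m n" "T * W = 1\<^sub>m n" using inv_iff[OF W(1)] W(2) by blast
  have claim1: "\<Delta> $$ (a,b) = (\<Sum>l<k. \<Sum>j<k. cnj (W $$ (l,a)) * B $$ (l,j) * W $$ (j,b))"
    if ab: "a < n" "b < n" for a b
  proof -
    have "\<Delta> $$ (a,b) = (\<Sum>l<n. \<Sum>j<n. cnj (W $$ (l,a)) * G $$ (l,j) * W $$ (j,b))"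
      unfolding \<Delta>_def by (rule cong_entry[OF W(1) Gc ab])
    also have "\<dots> = (\<Sum>l\<in>{..<k}. \<Sum>j<n. cnj (W $$ (l,a)) * G $$ (l,j) * W $$ (j,b))"
      by (rule sum_sparse) (use kn in \<open>auto simp: G\<close>)
    also have "\<dots> = (\<Sum>l<k. \<Sum>j<k. cnj (W $$ (l,a)) * B $$ (l,j) * W $$ (j,b))"
    proof (rule sum.cong[OF refl])
      fix l assume l: "l \<in> {..<k}"
      have "(\<Sum>j<n. cnj (W $$ (l,a)) * G $$ (l,j) * W $$ (j,b)) = (\<Sum>j\<in>{..<k}. cnj (W $$ (l,a)) * G $$ (l,j) * W $$ (j,b))"
        by (rule sum_sparse) (use kn l in \<open>auto simp: G\<close>)
      also have "\<dots> = (\<Sum>j<k. cnj (W $$ (l,a)) * B $$ (l,j) * W $$ (j,b))"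
        by (rule sum.cong[OF refl]) (use kn l in \<open>auto simp: G\<close>)
      finally show "(\<Sum>j<n. cnj (W $$ (l,a)) * G $$ (l,j) * W $$ (j,b)) = (\<Sum>j<k. cnj (W $$ (l,a)) * B $$ (l,j) * W $$ (j,b))" .
    qed
    finally show ?thesis .
  qed
  define J1 where "J1 = {a. a < n \<and> \<Delta> $$ (a,a) \<noteq> 0}"
  have claim2: "W $$ (i,a) = 0" if a: "a < n" "\<Delta> $$ (a,a) = 0" and i: "i < k" for a i
  proof -
    have aW: "mat_adjoint W \<in> carrier_mat n n" using W by simp
    define z where "z = col (G * W) a"
    have zc: "z \<in> carrier_vec n" unfolding z_def using Gc W a by (simp add: carrier_vecI carrier_matD)
    have "mat_adjoint W *\<^sub>v z = col \<Delta> a" unfolding z_def \<Delta>_def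
      using col_mult2[OF aW mult_carrier_mat[OF Gc W(1)] a(1)] assoc_mult_mat[OF aW Gc W(1)] by simp
    also have "\<dots> = 0\<^sub>v n" using dgD \<Delta>c a by (intro eq_vecI) (auto simp: diagonal_mat_def carrier_matD)
    finally have "z = 0\<^sub>v n" using invertible_adj[OF W] zc unfolding inv_kernel[OF aW] by blast
    define y where "y = vec k (\<lambda>i. W $$ (i,a))"
    have yc: "y \<in> carrier_vec k" unfolding y_def by simp
    have "B *\<^sub>v y = 0\<^sub>v k"
    proof (rule eq_vecI)
      fix i assume "i < dim_vec (0\<^sub>v k :: complex vec)" hence i: "i < k" by simp
      have "(B *\<^sub>v y) $ i = (\<Sum>j<k. B $$ (i,j) * W $$ (j,a))"
        using mult_vec_entry[OF B(1) yc i] unfolding y_def by simp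
      also have "\<dots> = (\<Sum>j\<in>{..<k}. G $$ (i,j) * W $$ (j,a))"
        by (rule sum.cong[OF refl]) (use kn i in \<open>auto simp: G\<close>)
      also have "\<dots> = (\<Sum>j<n. G $$ (i,j) * W $$ (j,a))"
        by (rule sum_sparse[symmetric]) (use kn i in \<open>auto simp: G\<close>)
      also have "\<dots> = z $ i" unfolding z_def using Gc W a i kn
        by (simp add: scalar_prod_def lessThan_atLeast0 carrier_matD)
      also have "\<dots> = 0" using \<open>z = 0\<^sub>v n\<close> i kn by simp
      finally show "(B *\<^sub>v y) $ i = 0\<^sub>v k $ i" using i by simp
    qed (use B in simp)
    hence "y = 0\<^sub>v k" using B yc unfolding inv_kernel[OF B(1)] by blast
    hence "y $ i = 0" using i by simp
    thus ?thesis unfolding y_def using i by simp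
  qed
  have finJ: "finite J1" unfolding J1_def by simp
  define p where "p = card J1"
  obtain \<sigma> where \<sigma>: "bij_betw \<sigma> {0..<p} J1" using ex_bij_betw_nat_finite[OF finJ] unfolding p_def by blast
  have \<sigma>J: "\<sigma> a \<in> J1" if "a < p" for a using \<sigma> that unfolding bij_betw_def by auto
  have \<sigma>n: "\<sigma> a < n" "\<Delta> $$ (\<sigma> a, \<sigma> a) \<noteq> 0" if "a < p" for a using \<sigma>J[OF that] unfolding J1_def by auto
  have \<sigma>inj: "\<sigma> a = \<sigma> b \<Longrightarrow> a = b" if "a < p" "b < p" for a b
    using \<sigma> that unfolding bij_betw_def inj_on_def by auto
  define U where "U = mat k p (\<lambda>(i,a). W $$ (i, \<sigma> a))"
  define Z where "Z = mat p k (\<lambda>(a,j). T $$ (\<sigma> a, j))"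
  have Uc: "U \<in> carrier_mat k p" and Zc: "Z \<in> carrier_mat p k" unfolding U_def Z_def by auto
  have UZ: "U * Z = 1\<^sub>m k"
  proof (rule eq_matI)
    fix i j assume "i < dim_row (1\<^sub>m k :: complex mat)" "j < dim_col (1\<^sub>m k :: complex mat)"
    hence ij: "i < k" "j < k" by auto
    have "(U * Z) $$ (i,j) = (\<Sum>a\<in>{0..<p}. W $$ (i, \<sigma> a) * T $$ (\<sigma> a, j))"
      using Uc Zc ij unfolding U_def Z_def by (simp add: scalar_prod_def)
    also have "\<dots> = (\<Sum>l\<in>J1. W $$ (i, l) * T $$ (l, j))"
      by (rule sum.reindex_bij_betw[OF \<sigma>])
    also have "\<dots> = (\<Sum>l<n. W $$ (i, l) * T $$ (l, j))"
      by (rule sum_sparse[symmetric]) (use claim2 ij in \<open>auto simp: J1_def\<close>)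
    also have "\<dots> = (W * T) $$ (i,j)" using W(1) T(1) ij kn by (simp add: scalar_prod_def lessThan_atLeast0 carrier_matD)
    finally show "(U * Z) $$ (i,j) = 1\<^sub>m k $$ (i,j)" using T ij kn by simp
  qed (use Uc Zc in auto)
  define E where "E = cong U B"
  have Ec: "E \<in> carrier_mat p p" unfolding E_def using Uc B by (metis adj_carrier mult_carrier_mat)
  have Ee: "E $$ (a,b) = \<Delta> $$ (\<sigma> a, \<sigma> b)" if ab: "a < p" "b < p" for a b
  proof -
    have "E $$ (a,b) = (\<Sum>l<k. \<Sum>j<k. cnj (U $$ (l,a)) * B $$ (l,j) * U $$ (j,b))"
      unfolding E_def by (rule cong_entry2[OF Uc B(1) ab])
    also have "\<dots> = (\<Sum>l<k. \<Sum>j<k. cnj (W $$ (l,\<sigma> a)) * B $$ (l,j) * W $$ (j,\<sigma> b))"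
      unfolding U_def using ab by simp
    also have "\<dots> = \<Delta> $$ (\<sigma> a, \<sigma> b)" using claim1[OF \<sigma>n(1)[OF ab(1)] \<sigma>n(1)[OF ab(2)]] by simp
    finally show ?thesis .
  qed
  have Ed: "diagonal_mat E" unfolding diagonal_mat_def
  proof (intro allI impI)
    fix a b assume ab: "a < dim_row E" "b < dim_col E" "a \<noteq> b"
    hence ab': "a < p" "b < p" using Ec by auto
    have "\<sigma> a \<noteq> \<sigma> b" using \<sigma>inj ab' ab(3) by blast
    thus "E $$ (a,b) = 0" using Ee[OF ab'] dgD \<Delta>c \<sigma>n(1)[OF ab'(1)] \<sigma>n(1)[OF ab'(2)]
      unfolding diagonal_mat_def by auto
  qed
  have Einv: "invertible_mat E" unfolding inv_kernel[OF Ec]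
  proof (intro ballI impI)
    fix v assume v: "v \<in> carrier_vec p" and Ev: "E *\<^sub>v v = 0\<^sub>v p"
    show "v = 0\<^sub>v p"
    proof (rule eq_vecI)
      fix a assume "a < dim_vec (0\<^sub>v p :: complex vec)" hence a: "a < p" by simp
      have "E $$ (a,a) * v $ a = 0" using diag_mult_vec[OF Ec Ed v a] Ev a by simp
      moreover have "E $$ (a,a) \<noteq> 0" using Ee[OF a a] \<sigma>n(2)[OF a] by simp
      ultimately show "v $ a = 0\<^sub>v p $ a" using a by simp
    qed (use v in simp)
  qed
  obtain Ei where Ei: "Ei \<in> carrier_mat p p" "Ei * E = 1\<^sub>m p" using inv_iff[OF Ec] Einv by blast
  define X where "X = Ei * mat_adjoint U * B"
  have aU: "mat_adjoint U \<in> carrier_mat p k" using Uc by simp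
  have Xc: "X \<in> carrier_mat p k" unfolding X_def using Ei(1) aU B(1) by (metis mult_carrier_mat)
  have "X * U = Ei * E"
  proof -
    have 1: "Ei * mat_adjoint U \<in> carrier_mat p k" using Ei(1) aU by simp
    have 2: "B * U \<in> carrier_mat k p" using B(1) Uc by simp
    have "X * U = (Ei * mat_adjoint U) * (B * U)" unfolding X_def by (rule assoc_mult_mat[OF 1 B(1) Uc])
    also have "\<dots> = Ei * (mat_adjoint U * (B * U))" by (rule assoc_mult_mat[OF Ei(1) aU 2])
    also have "mat_adjoint U * (B * U) = E" unfolding E_def by (rule assoc_mult_mat[OF aU B(1) Uc, symmetric])
    finally show ?thesis .
  qed
  hence XU: "X * U = 1\<^sub>m p" using Ei by simp
  have "p \<le> k" by (rule dim_le[OF Xc Uc XU])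
  moreover have "k \<le> p" by (rule dim_le[OF Uc Zc UZ])
  ultimately have pk: "p = k" by simp
  have Uc': "U \<in> carrier_mat k k" using Uc pk by simp
  have Uinv: "invertible_mat U" using invI[OF Uc' _ UZ] Zc pk by simp
  show ?thesis using Uc' Uinv Ed unfolding E_def by blast
qed

lemma zero_mat_mult_vec[simp]: "v \<in> carrier_vec m \<Longrightarrow> (0\<^sub>m k m :: complex mat) *\<^sub>v v = 0\<^sub>v k"
  by (intro eq_vecI) (auto simp: scalar_prod_def)

lemma fwd_b: assumes A: "A \<in> carrier_mat n n" and R: "R \<in> carrier_mat n n" "invertible_mat R"
  and dg: "diagonal_mat (cong R A)" and rp: "regular_part A B"
  shows "diagonalizable_mat (cosquare B) \<and> (\<forall>z. eigenvalue (cosquare B) z \<longrightarrow> cmod z = 1)"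
proof -
  define k where "k = dim_row B"
  have sq: "square_mat B" and Binv: "invertible_mat B" using rp unfolding regular_part_def by blast+
  have Bc: "B \<in> carrier_mat k k" using sq unfolding k_def by (intro carrier_matI) auto
  obtain rs S where rs: "\<forall>r\<in>set rs. r > 0"
    and S: "S \<in> carrier_mat (dim_row (diag_block_mat (B # map (\<lambda>r. jordan_block r 0) rs))) (dim_row (diag_block_mat (B # map (\<lambda>r. jordan_block r 0) rs)))"
      "invertible_mat S" "A = cong S (diag_block_mat (B # map (\<lambda>r. jordan_block r 0) rs))"
    using rp unfolding regular_part_def star_congruent_def by blast
  define N where "N = diag_block_mat (map (\<lambda>r. jordan_block r (0::complex)) rs)"
  define m where "m = sum_list rs"
  have Nc: "N \<in> carrier_mat m m" and Nsu: "\<And>i j. i < m \<Longrightarrow> j < m \<Longrightarrow> j \<le> i \<Longrightarrow> N $$ (i,j) = 0"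
    using jdbm[of rs] unfolding N_def m_def by blast+
  define G0 where "G0 = four_block_mat B (0\<^sub>m k m) (0\<^sub>m m k) N"
  have G0eq: "diag_block_mat (B # map (\<lambda>r. jordan_block r 0) rs) = G0"
    unfolding G0_def dbm_cons N_def[symmetric] using Nc Bc by (simp add: carrier_matD)
  have G0c: "G0 \<in> carrier_mat (k + m) (k + m)" unfolding G0_def using Bc Nc by simp
  have Sc: "S \<in> carrier_mat (k + m) (k + m)" using S(1) unfolding G0eq using G0c by (simp add: carrier_matD)
  have AS: "A = cong S G0" using S(3) unfolding G0eq .
  have "dim_row A = k + m" unfolding AS using Sc by (simp add: carrier_matD)
  hence nkm: "n = k + m" using A by (simp add: carrier_matD)
  define W where "W = S * R"
  have Wc: "W \<in> carrier_mat n n" unfolding W_def using Sc R nkm by simp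
  have Winv: "invertible_mat W" unfolding W_def using inv_mult[of S n R] Sc R S(2) nkm by simp
  have G0c': "G0 \<in> carrier_mat n n" using G0c nkm by simp
  have dgW: "diagonal_mat (cong W G0)" unfolding W_def using cong_comp[OF _ R(1) G0c', of S] Sc nkm AS dg by simp
  have ksG: "\<And>v. v \<in> carrier_vec n \<Longrightarrow> G0 *\<^sub>v v = 0\<^sub>v n \<Longrightarrow> mat_adjoint G0 *\<^sub>v v = 0\<^sub>v n"
    using kersym[OF Wc Winv G0c' dgW] by blast
  have ksN: "mat_adjoint N *\<^sub>v v = 0\<^sub>v m" if v: "v \<in> carrier_vec m" and Nv: "N *\<^sub>v v = 0\<^sub>v m" for v
  proof -
    define x where "x = 0\<^sub>v k @\<^sub>v v"
    have xc: "x \<in> carrier_vec n" unfolding x_def using v nkm by simp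
    have "G0 *\<^sub>v x = (B *\<^sub>v 0\<^sub>v k + 0\<^sub>m k m *\<^sub>v v) @\<^sub>v (0\<^sub>m m k *\<^sub>v 0\<^sub>v k + N *\<^sub>v v)"
      unfolding G0_def x_def by (rule four_block_mat_mult_vec[OF Bc _ _ Nc]) (use v in auto)
    also have "\<dots> = 0\<^sub>v n" unfolding Nv using Bc v nkm append_zero_vec by simp
    finally have "mat_adjoint G0 *\<^sub>v x = 0\<^sub>v n" using ksG xc by blast
    moreover have "mat_adjoint G0 *\<^sub>v x = (mat_adjoint B *\<^sub>v 0\<^sub>v k + 0\<^sub>m k m *\<^sub>v v) @\<^sub>v (0\<^sub>m m k *\<^sub>v 0\<^sub>v k + mat_adjoint N *\<^sub>v v)"
      unfolding G0_def adj_four_block[OF Bc Nc] x_def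
      by (rule four_block_mat_mult_vec) (use v Bc Nc in auto)
    moreover have "mat_adjoint B *\<^sub>v 0\<^sub>v k + 0\<^sub>m k m *\<^sub>v v = 0\<^sub>v k" using adj_carrier[OF Bc] v by simp
    moreover have "0\<^sub>m m k *\<^sub>v 0\<^sub>v k + mat_adjoint N *\<^sub>v v = mat_adjoint N *\<^sub>v v"
      using adj_carrier[OF Nc] v by simp
    ultimately have eq: "0\<^sub>v k @\<^sub>v (mat_adjoint N *\<^sub>v v) = 0\<^sub>v n" by simp
    show ?thesis
    proof (rule eq_vecI)
      fix i assume "i < dim_vec (0\<^sub>v m :: complex vec)" hence i: "i < m" by simp
      have "(0\<^sub>v k @\<^sub>v (mat_adjoint N *\<^sub>v v)) $ (k + i) = 0" unfolding eq using i nkm by simp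
      thus "(mat_adjoint N *\<^sub>v v) $ i = 0\<^sub>v m $ i" using i Nc by simp
    qed (use Nc in simp)
  qed
  have N0: "N = 0\<^sub>m m m" by (rule strict_upper_zero[OF Nc Nsu ksN])
  have G0mat: "G0 = mat n n (\<lambda>(i,j). if i < k \<and> j < k then B $$ (i,j) else 0)"
    unfolding G0_def N0
  proof (rule eq_matI)
    fix i j assume "i < dim_row (mat n n (\<lambda>(i,j). if i < k \<and> j < k then B $$ (i,j) else 0))"
      "j < dim_col (mat n n (\<lambda>(i,j). if i < k \<and> j < k then B $$ (i,j) else (0::complex)))"
    hence ij: "i < k + m" "j < k + m" using nkm by auto
    have dB: "dim_row B = k" "dim_col B = k" using Bc by auto
    show "four_block_mat B (0\<^sub>m k m) (0\<^sub>m m k) (0\<^sub>m m m) $$ (i,j) = mat n n (\<lambda>(i,j). if i < k \<and> j < k then B $$ (i,j) else 0) $$ (i,j)"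
      using ij nkm by (simp add: dB)
  qed (use Bc nkm in \<open>simp_all add: carrier_matD\<close>)
  obtain U where U: "U \<in> carrier_mat k k" "invertible_mat U" "diagonal_mat (cong U B)"
    using select[OF Bc Binv Wc Winv _ G0mat dgW] nkm by auto
  show ?thesis by (rule L_fwd[OF Bc Binv U])
qed

lemma perm_exists: assumes J: "J \<subseteq> {..<n}"
  shows "\<exists>\<sigma>. (\<forall>a<n. \<sigma> a < n) \<and> (\<forall>a<n. a < card J \<longleftrightarrow> \<sigma> a \<in> J) \<and> inj_on \<sigma> {..<n} \<and> card J \<le> n"
proof -
  have finJ: "finite J" using J finite_subset by blast
  define J0 where "J0 = {..<n} - J"
  have finJ0: "finite J0" unfolding J0_def by simp
  define p where "p = card J"
  define q where "q = card J0"
  have pq: "p + q = n" unfolding p_def q_def J0_def using J card_Diff_subset[OF finJ J] card_mono[OF _ J]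
    by (simp add: finJ)
  obtain \<sigma>1 where s1: "bij_betw \<sigma>1 {0..<p} J" using ex_bij_betw_nat_finite[OF finJ] unfolding p_def by blast
  obtain \<sigma>2 where s2: "bij_betw \<sigma>2 {0..<q} J0" using ex_bij_betw_nat_finite[OF finJ0] unfolding q_def by blast
  define \<sigma> where "\<sigma> a = (if a < p then \<sigma>1 a else \<sigma>2 (a - p))" for a
  have r1: "\<sigma> a \<in> J" if "a < p" for a using s1 that unfolding \<sigma>_def bij_betw_def by auto
  have r2: "\<sigma> a \<in> J0" if "p \<le> a" "a < n" for a using s2 that pq unfolding \<sigma>_def bij_betw_def by auto
  have "\<forall>a<n. \<sigma> a < n" using r1 r2 J unfolding J0_def by (metis Diff_iff lessThan_iff not_le subsetD)
  moreover have "\<forall>a<n. a < p \<longleftrightarrow> \<sigma> a \<in> J" using r1 r2 unfolding J0_def by (metis Diff_iff not_le)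
  moreover have "inj_on \<sigma> {..<n}"
  proof (rule inj_onI)
    fix a b assume ab: "a \<in> {..<n}" "b \<in> {..<n}" "\<sigma> a = \<sigma> b"
    show "a = b"
    proof (cases "a < p"; cases "b < p")
      assume "a < p" "b < p"
      thus ?thesis using ab s1 unfolding \<sigma>_def bij_betw_def inj_on_def by auto
    next
      assume "a < p" "\<not> b < p"
      thus ?thesis using ab r1 r2 unfolding J0_def by (metis Diff_iff lessThan_iff not_le)
    next
      assume "\<not> a < p" "b < p"
      thus ?thesis using ab r1 r2 unfolding J0_def by (metis Diff_iff lessThan_iff not_le)
    next
      assume "\<not> a < p" "\<not> b < p"
      hence "a - p \<in> {0..<q}" "b - p \<in> {0..<q}" "\<sigma>2 (a - p) = \<sigma>2 (b - p)" using ab pq unfolding \<sigma>_def by auto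
      hence "a - p = b - p" using s2 unfolding bij_betw_def inj_on_def by blast
      thus ?thesis using \<open>\<not> a < p\<close> \<open>\<not> b < p\<close> by simp
    qed
  qed
  ultimately show ?thesis unfolding p_def using pq p_def by (intro exI[of _ \<sigma>]) auto
qed

lemma perm_mat: assumes V: "(V :: complex mat) \<in> carrier_mat n n" "invertible_mat V"
  and sn: "\<And>a. a < n \<Longrightarrow> \<sigma> a < n" and inj: "inj_on \<sigma> {..<n}"
  shows "\<exists>P \<in> carrier_mat n n. invertible_mat P \<and> V * P = mat n n (\<lambda>(i,a). V $$ (i, \<sigma> a)) \<and>
     (\<forall>M \<in> carrier_mat n n. \<forall>a<n. \<forall>b<n. cong P M $$ (a,b) = M $$ (\<sigma> a, \<sigma> b))"
proof -
  define P where "P = mat n n (\<lambda>(l,a). if l = \<sigma> a then 1 else (0::complex))"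
  define Q where "Q = mat n n (\<lambda>(a,l). if l = \<sigma> a then 1 else (0::complex))"
  have Pc: "P \<in> carrier_mat n n" and Qc: "Q \<in> carrier_mat n n" unfolding P_def Q_def by auto
  have QP: "Q * P = 1\<^sub>m n"
  proof (rule eq_matI)
    fix a b assume "a < dim_row (1\<^sub>m n :: complex mat)" "b < dim_col (1\<^sub>m n :: complex mat)"
    hence ab: "a < n" "b < n" by auto
    have "(Q * P) $$ (a,b) = (\<Sum>l<n. Q $$ (a,l) * P $$ (l,b))" using Pc Qc ab by (simp add: scalar_prod_def lessThan_atLeast0)
    also have "\<dots> = Q $$ (a, \<sigma> a) * P $$ (\<sigma> a, b)" by (rule sum_single[OF sn[OF ab(1)]]) (use ab in \<open>auto simp: Q_def\<close>)
    also have "\<dots> = (if a = b then 1 else 0)" using ab sn inj unfolding P_def Q_def inj_on_def by auto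
    finally show "(Q * P) $$ (a,b) = 1\<^sub>m n $$ (a,b)" using ab by simp
  qed (use Pc Qc in auto)
  have Pinv: "invertible_mat P" using invI[OF Pc Qc mat_mult_left_right_inverse[OF Qc Pc QP]] .
  have VP: "V * P = mat n n (\<lambda>(i,a). V $$ (i, \<sigma> a))"
  proof (rule eq_matI)
    fix i a assume "i < dim_row (mat n n (\<lambda>(i,a). V $$ (i, \<sigma> a)))" "a < dim_col (mat n n (\<lambda>(i,a). V $$ (i, \<sigma> a)))"
    hence ia: "i < n" "a < n" by auto
    have "(V * P) $$ (i,a) = (\<Sum>l<n. V $$ (i,l) * P $$ (l,a))" using Pc V(1) ia by (simp add: scalar_prod_def lessThan_atLeast0)
    also have "\<dots> = V $$ (i, \<sigma> a) * P $$ (\<sigma> a, a)" by (rule sum_single[OF sn[OF ia(2)]]) (use ia in \<open>auto simp: P_def\<close>)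
    also have "\<dots> = V $$ (i, \<sigma> a)" using ia sn unfolding P_def by auto
    finally show "(V * P) $$ (i,a) = mat n n (\<lambda>(i,a). V $$ (i, \<sigma> a)) $$ (i,a)" using ia by simp
  qed (use Pc V in auto)
  have cP: "cong P M $$ (a,b) = M $$ (\<sigma> a, \<sigma> b)" if M: "M \<in> carrier_mat n n" and ab: "a < n" "b < n" for M a b
  proof -
    have "cong P M $$ (a,b) = (\<Sum>l<n. \<Sum>k<n. cnj (P $$ (l,a)) * M $$ (l,k) * P $$ (k,b))"
      by (rule cong_entry[OF Pc M ab])
    also have "\<dots> = (\<Sum>k<n. cnj (P $$ (\<sigma> a,a)) * M $$ (\<sigma> a,k) * P $$ (k,b))"
      by (rule sum_single[OF sn[OF ab(1)]]) (use ab in \<open>auto simp: P_def\<close>)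
    also have "\<dots> = cnj (P $$ (\<sigma> a,a)) * M $$ (\<sigma> a,\<sigma> b) * P $$ (\<sigma> b,b)"
      by (rule sum_single[OF sn[OF ab(2)]]) (use ab in \<open>auto simp: P_def\<close>)
    also have "\<dots> = M $$ (\<sigma> a, \<sigma> b)" using ab sn unfolding P_def by auto
    finally show ?thesis .
  qed
  show ?thesis using Pc Pinv VP cP by blast
qed

lemma bwd_block: assumes A: "(A :: complex mat) \<in> carrier_mat n n"
  and ks: "\<And>v. v \<in> carrier_vec n \<Longrightarrow> A *\<^sub>v v = 0\<^sub>v n \<Longrightarrow> mat_adjoint A *\<^sub>v v = 0\<^sub>v n"
  shows "\<exists>S \<in> carrier_mat n n. invertible_mat S \<and> (\<exists>p \<le> n. \<exists>Bp \<in> carrier_mat p p. invertible_mat Bp \<and>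
     cong S A = four_block_mat Bp (0\<^sub>m p (n - p)) (0\<^sub>m (n - p) p) (0\<^sub>m (n - p) (n - p)))"
proof -
  define H where "H = mat_adjoint A * A"
  have aA: "mat_adjoint A \<in> carrier_mat n n" using A by simp
  have Hc: "H \<in> carrier_mat n n" unfolding H_def using mult_carrier_mat[OF aA A] .
  have K: "classK n (\<lambda>_. 1) H" unfolding classK_def
  proof (intro allI impI)
    fix i j assume ij: "i < n" "j < n"
    have "H $$ (i,j) = (\<Sum>l<n. cnj (A $$ (l,i)) * A $$ (l,j))" unfolding H_def using A ij
      by (simp add: scalar_prod_def lessThan_atLeast0 carrier_matD)
    moreover have "H $$ (j,i) = (\<Sum>l<n. cnj (A $$ (l,j)) * A $$ (l,i))" unfolding H_def using A ij
      by (simp add: scalar_prod_def lessThan_atLeast0 carrier_matD)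
    ultimately show "H $$ (i,j) = 1 * cnj (H $$ (j,i))" by (simp add: cnj_sum mult.commute)
  qed
  have um: "unimod n (\<lambda>_. 1)" unfolding unimod_def by simp
  obtain V where V: "V \<in> carrier_mat n n" "invertible_mat V" "diagonal_mat (cong V H)" using engine[OF Hc K um] by blast
  define \<Delta> where "\<Delta> = cong V H"
  have \<Delta>c: "\<Delta> \<in> carrier_mat n n" unfolding \<Delta>_def using V Hc by simp
  have \<Delta>d: "diagonal_mat \<Delta>" using V(3) unfolding \<Delta>_def .
  define J1 where "J1 = {a. a < n \<and> \<Delta> $$ (a,a) \<noteq> 0}"
  define p where "p = card J1"
  obtain \<sigma> where \<sigma>: "\<forall>a<n. \<sigma> a < n" "\<forall>a<n. a < p \<longleftrightarrow> \<sigma> a \<in> J1" "inj_on \<sigma> {..<n}" "p \<le> n"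
    using perm_exists[of J1 n] unfolding p_def by (metis (no_types, lifting) J1_def mem_Collect_eq lessThan_iff subsetI)
  obtain P where P: "P \<in> carrier_mat n n" "invertible_mat P" "V * P = mat n n (\<lambda>(i,a). V $$ (i, \<sigma> a))"
    "\<forall>M \<in> carrier_mat n n. \<forall>a<n. \<forall>b<n. cong P M $$ (a,b) = M $$ (\<sigma> a, \<sigma> b)"
    using perm_mat[OF V(1,2) _ \<sigma>(3)] \<sigma>(1) by blast
  define S where "S = V * P"
  have Sc: "S \<in> carrier_mat n n" unfolding S_def using mult_carrier_mat[OF V(1) P(1)] .
  have Sinv: "invertible_mat S" unfolding S_def by (rule inv_mult[OF V(1) P(1) V(2) P(2)])
  have aS: "mat_adjoint S \<in> carrier_mat n n" using Sc by simp
  define AS where "AS = A * S"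
  have ASc: "AS \<in> carrier_mat n n" unfolding AS_def using mult_carrier_mat[OF A Sc] .
  define C1 where "C1 = cong S H"
  have C1c: "C1 \<in> carrier_mat n n" unfolding C1_def using Sc Hc by simp
  have C1e: "C1 $$ (a,b) = \<Delta> $$ (\<sigma> a, \<sigma> b)" if "a < n" "b < n" for a b
    unfolding C1_def S_def \<Delta>_def cong_comp[OF V(1) P(1) Hc] using P(4) that \<Delta>c[unfolded \<Delta>_def] by blast
  have C1d: "diagonal_mat C1" unfolding diagonal_mat_def
  proof (intro allI impI)
    fix a b assume ab: "a < dim_row C1" "b < dim_col C1" "a \<noteq> b"
    hence ab': "a < n" "b < n" using C1c by auto
    have "\<sigma> a \<noteq> \<sigma> b" using \<sigma>(3) ab' ab(3) unfolding inj_on_def by blast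
    thus "C1 $$ (a,b) = 0" using C1e[OF ab'] \<Delta>d \<Delta>c \<sigma>(1) ab' unfolding diagonal_mat_def by auto
  qed
  have C1AS: "C1 = mat_adjoint AS * AS"
  proof -
    have "mat_adjoint AS = mat_adjoint S * mat_adjoint A" unfolding AS_def by (rule adj_mult[OF A Sc])
    thus ?thesis unfolding C1_def H_def AS_def using aS aA A Sc
      by (simp add: assoc_mult_mat[of _ n n _ n _ n] mult_carrier_mat[of _ n n _ n])
  qed
  have ASz: "AS $$ (i,b) = 0" if b: "b < n" "p \<le> b" and i: "i < n" for i b
  proof -
    have "C1 $$ (b,b) = 0" using C1e[OF b(1) b(1)] \<sigma>(2) b unfolding J1_def using \<sigma>(1) by auto
    moreover have "C1 $$ (b,b) = (\<Sum>l<n. cnj (AS $$ (l,b)) * AS $$ (l,b))" unfolding C1AS using ASc b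
      by (simp add: scalar_prod_def lessThan_atLeast0 carrier_matD)
    ultimately show ?thesis using sum_sq_zero[of "\<lambda>l. AS $$ (l,b)" n i] i by simp
  qed
  define G where "G = cong S A"
  have Gc: "G \<in> carrier_mat n n" unfolding G_def using Sc A by simp
  have Geq: "G = mat_adjoint S * AS" unfolding G_def AS_def by (rule assoc_mult_mat[OF aS A Sc])
  have colz: "G $$ (a,b) = 0" if "a < n" "b < n" "p \<le> b" for a b
  proof -
    have "G $$ (a,b) = (\<Sum>i<n. cnj (S $$ (i,a)) * AS $$ (i,b))" unfolding Geq using that Sc ASc
      by (simp add: scalar_prod_def lessThan_atLeast0 carrier_matD)
    also have "\<dots> = 0" using ASz that by simp
    finally show ?thesis .
  qed
  have rowz: "G $$ (a,b) = 0" if ab: "a < n" "b < n" "p \<le> a" for a b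
  proof -
    define s where "s = col S a"
    have sc: "s \<in> carrier_vec n" unfolding s_def using Sc by (simp add: carrier_vecI carrier_matD)
    have "A *\<^sub>v s = col AS a" unfolding s_def AS_def using col_mult2[OF A Sc ab(1)] by simp
    also have "\<dots> = 0\<^sub>v n" using ASz ab ASc by (intro eq_vecI) (auto simp: carrier_matD)
    finally have "mat_adjoint A *\<^sub>v s = 0\<^sub>v n" using ks sc by blast
    have z: "(\<Sum>i<n. cnj (A $$ (i,j)) * S $$ (i,a)) = 0" if j: "j < n" for j
    proof -
      have "(\<Sum>i<n. cnj (A $$ (i,j)) * S $$ (i,a)) = (\<Sum>i<n. mat_adjoint A $$ (j,i) * s $ i)"
        by (rule sum.cong) (use Sc A ab j in \<open>auto simp: s_def carrier_matD\<close>)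
      also have "\<dots> = (mat_adjoint A *\<^sub>v s) $ j" using mult_vec_entry[OF aA sc j] by simp
      also have "\<dots> = 0" using \<open>mat_adjoint A *\<^sub>v s = 0\<^sub>v n\<close> j by simp
      finally show ?thesis .
    qed
    have SA: "(mat_adjoint S * A) $$ (a,j) = 0" if j: "j < n" for j
    proof -
      have "(mat_adjoint S * A) $$ (a,j) = (\<Sum>i<n. cnj (S $$ (i,a)) * A $$ (i,j))" using ab j Sc A
        by (simp add: scalar_prod_def lessThan_atLeast0 carrier_matD)
      also have "\<dots> = cnj (\<Sum>i<n. cnj (A $$ (i,j)) * S $$ (i,a))" by (simp add: cnj_sum mult.commute)
      also have "\<dots> = 0" using z[OF j] by simp
      finally show ?thesis .
    qed
    have "G $$ (a,b) = (\<Sum>j<n. (mat_adjoint S * A) $$ (a,j) * S $$ (j,b))" unfolding G_def using ab Sc A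
      by (simp add: scalar_prod_def lessThan_atLeast0 carrier_matD)
    also have "\<dots> = 0" using SA by simp
    finally show ?thesis .
  qed
  define Bp where "Bp = mat p p (\<lambda>(i,j). G $$ (i,j))"
  have Bpc: "Bp \<in> carrier_mat p p" unfolding Bp_def by simp
  have Gblock: "G = four_block_mat Bp (0\<^sub>m p (n - p)) (0\<^sub>m (n - p) p) (0\<^sub>m (n - p) (n - p))"
  proof (rule eq_matI)
    fix i j assume "i < dim_row (four_block_mat Bp (0\<^sub>m p (n - p)) (0\<^sub>m (n - p) p) (0\<^sub>m (n - p) (n - p)))"
      "j < dim_col (four_block_mat Bp (0\<^sub>m p (n - p)) (0\<^sub>m (n - p) p) (0\<^sub>m (n - p) (n - p)))"
    hence ij: "i < n" "j < n" using \<sigma>(4) Bpc by auto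
    show "G $$ (i,j) = four_block_mat Bp (0\<^sub>m p (n - p)) (0\<^sub>m (n - p) p) (0\<^sub>m (n - p) (n - p)) $$ (i,j)"
      using ij \<sigma>(4) colz rowz by (auto simp: Bp_def)
  qed (use Gc Bpc \<sigma>(4) in auto)
  have Bpinv: "invertible_mat Bp" unfolding inv_kernel[OF Bpc]
  proof (intro ballI impI)
    fix u assume u: "u \<in> carrier_vec p" and Bu: "Bp *\<^sub>v u = 0\<^sub>v p"
    define x where "x = u @\<^sub>v 0\<^sub>v (n - p)"
    have xc: "x \<in> carrier_vec n" unfolding x_def using u \<sigma>(4) by (intro carrier_vecI) (simp add: carrier_vecD)
    have "G *\<^sub>v x = (Bp *\<^sub>v u + 0\<^sub>m p (n - p) *\<^sub>v 0\<^sub>v (n - p)) @\<^sub>v (0\<^sub>m (n - p) p *\<^sub>v u + 0\<^sub>m (n - p) (n - p) *\<^sub>v 0\<^sub>v (n - p))"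
      unfolding Gblock x_def by (rule four_block_mat_mult_vec) (use u Bpc in auto)
    also have "\<dots> = 0\<^sub>v n" unfolding Bu using u \<sigma>(4) append_zero_vec[of p "n - p"] by simp
    finally have Gx: "G *\<^sub>v x = 0\<^sub>v n" .
    have "mat_adjoint S *\<^sub>v (AS *\<^sub>v x) = 0\<^sub>v n" using Gx unfolding Geq using aS ASc xc by simp
    hence ASx: "AS *\<^sub>v x = 0\<^sub>v n" using invertible_adj[OF Sc Sinv] ASc xc unfolding inv_kernel[OF aS] by simp
    have "C1 *\<^sub>v x = mat_adjoint AS *\<^sub>v (AS *\<^sub>v x)" unfolding C1AS using assoc_mult_mat_vec[OF adj_carrier[OF ASc] ASc xc] .
    hence C1x: "C1 *\<^sub>v x = 0\<^sub>v n" unfolding ASx using ASc by simp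
    show "u = 0\<^sub>v p"
    proof (rule eq_vecI)
      fix a assume "a < dim_vec (0\<^sub>v p :: complex vec)" hence a: "a < p" by simp
      hence an: "a < n" using \<sigma>(4) by simp
      have "C1 $$ (a,a) * x $ a = 0" using diag_mult_vec[OF C1c C1d xc an] C1x an by simp
      moreover have "C1 $$ (a,a) \<noteq> 0" using C1e[OF an an] \<sigma>(2) a an unfolding J1_def by auto
      moreover have "x $ a = u $ a" unfolding x_def using a u by simp
      ultimately show "u $ a = 0\<^sub>v p $ a" using a by simp
    qed (use u in simp)
  qed
  show ?thesis using Sc Sinv \<sigma>(4) Bpc Bpinv Gblock unfolding G_def by blast
qed

lemma diag_four_block0: assumes "D \<in> carrier_mat p p" "diagonal_mat D"
  shows "diagonal_mat (four_block_mat D (0\<^sub>m p q) (0\<^sub>m q p) (0\<^sub>m q q))"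
  using assms unfolding diagonal_mat_def by (auto simp: carrier_matD)

lemma bwd: assumes A: "(A :: complex mat) \<in> carrier_mat n n"
  and ks: "\<And>v. v \<in> carrier_vec n \<Longrightarrow> A *\<^sub>v v = 0\<^sub>v n \<Longrightarrow> mat_adjoint A *\<^sub>v v = 0\<^sub>v n"
  and hyp: "\<forall>B. regular_part A B \<longrightarrow> diagonalizable_mat (cosquare B) \<and> (\<forall>z. eigenvalue (cosquare B) z \<longrightarrow> cmod z = 1)"
  shows "diagonalizable_by_star_congruence A"
proof -
  obtain S p Bp where S: "S \<in> carrier_mat n n" "invertible_mat S" and pn: "p \<le> n"
    and Bp: "Bp \<in> carrier_mat p p" "invertible_mat Bp"
    and G: "cong S A = four_block_mat Bp (0\<^sub>m p (n - p)) (0\<^sub>m (n - p) p) (0\<^sub>m (n - p) (n - p))"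
    using bwd_block[OF A ks] by blast
  define q where "q = n - p"
  have nq: "n = p + q" unfolding q_def using pn by simp
  define G0 where "G0 = four_block_mat Bp (0\<^sub>m p q) (0\<^sub>m q p) (0\<^sub>m q q)"
  have G0c: "G0 \<in> carrier_mat n n" unfolding G0_def nq using Bp by simp
  have SA: "cong S A = G0" unfolding G G0_def q_def ..
  have dbm: "diag_block_mat (Bp # map (\<lambda>r. jordan_block r 0) (replicate q 1)) = G0"
    unfolding dbm_cons jdbm_zero G0_def using Bp by (simp add: carrier_matD)
  obtain S' where S': "S' \<in> carrier_mat n n" "S * S' = 1\<^sub>m n" "S' * S = 1\<^sub>m n" using inv_iff[OF S(1)] S(2) by blast
  have S'inv: "invertible_mat S'" by (rule invI[OF S'(1) S(1) S'(3)])
  have "cong S' G0 = cong (S * S') A" unfolding SA[symmetric] by (rule cong_comp[OF S(1) S'(1) A, symmetric])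
  also have "\<dots> = A" unfolding S'(2) using A by simp
  finally have AG: "A = cong S' G0" ..
  have "star_congruent A G0" unfolding star_congruent_def
    using S'(1) S'inv AG G0c by (intro exI[of _ S']) (auto simp: carrier_matD)
  hence rp: "regular_part A Bp" unfolding regular_part_def using Bp dbm
    by (intro conjI exI[of _ "replicate q 1"]) (auto simp: carrier_matD)
  obtain Rp where Rp: "Rp \<in> carrier_mat p p" "invertible_mat Rp" "diagonal_mat (cong Rp Bp)"
    using L_back[OF Bp] hyp rp by blast
  obtain Rp' where Rp': "Rp' \<in> carrier_mat p p" "Rp * Rp' = 1\<^sub>m p" using inv_iff[OF Rp(1)] Rp(2) by blast
  define F where "F = four_block_mat Rp (0\<^sub>m p q) (0\<^sub>m q p) (1\<^sub>m q)"
  define F' where "F' = four_block_mat Rp' (0\<^sub>m p q) (0\<^sub>m q p) (1\<^sub>m q)"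
  have Fc: "F \<in> carrier_mat n n" unfolding F_def nq using Rp by simp
  have F'c: "F' \<in> carrier_mat n n" unfolding F'_def nq using Rp' by simp
  have "F * F' = four_block_mat (Rp * Rp' + 0\<^sub>m p q * 0\<^sub>m q p) (Rp * 0\<^sub>m p q + 0\<^sub>m p q * 1\<^sub>m q)
      (0\<^sub>m q p * Rp' + 1\<^sub>m q * 0\<^sub>m q p) (0\<^sub>m q p * 0\<^sub>m p q + 1\<^sub>m q * 1\<^sub>m q)"
    unfolding F_def F'_def by (rule mult_four_block_mat) (use Rp Rp' in auto)
  also have "\<dots> = 1\<^sub>m n" unfolding Rp'(2) nq using Rp Rp' by simp
  finally have Finv: "invertible_mat F" by (rule invI[OF Fc F'c])
  have aF: "mat_adjoint F = four_block_mat (mat_adjoint Rp) (0\<^sub>m p q) (0\<^sub>m q p) (1\<^sub>m q)"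
    unfolding F_def using adj_four_block[OF Rp(1), of "1\<^sub>m q" q] by simp
  have aRp: "mat_adjoint Rp \<in> carrier_mat p p" using Rp by simp
  have "mat_adjoint F * G0 = four_block_mat (mat_adjoint Rp * Bp + 0\<^sub>m p q * 0\<^sub>m q p) (mat_adjoint Rp * 0\<^sub>m p q + 0\<^sub>m p q * 0\<^sub>m q q)
      (0\<^sub>m q p * Bp + 1\<^sub>m q * 0\<^sub>m q p) (0\<^sub>m q p * 0\<^sub>m p q + 1\<^sub>m q * 0\<^sub>m q q)"
    unfolding aF G0_def by (rule mult_four_block_mat) (use aRp Bp in auto)
  also have "\<dots> = four_block_mat (mat_adjoint Rp * Bp) (0\<^sub>m p q) (0\<^sub>m q p) (0\<^sub>m q q)"
    using aRp Bp by (simp add: right_mult_zero_mat)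
  finally have e1: "mat_adjoint F * G0 = four_block_mat (mat_adjoint Rp * Bp) (0\<^sub>m p q) (0\<^sub>m q p) (0\<^sub>m q q)" .
  have RB: "mat_adjoint Rp * Bp \<in> carrier_mat p p" using aRp Bp by simp
  have "cong F G0 = four_block_mat (mat_adjoint Rp * Bp) (0\<^sub>m p q) (0\<^sub>m q p) (0\<^sub>m q q) * F" unfolding e1 ..
  also have "\<dots> = four_block_mat (mat_adjoint Rp * Bp * Rp + 0\<^sub>m p q * 0\<^sub>m q p) (mat_adjoint Rp * Bp * 0\<^sub>m p q + 0\<^sub>m p q * 1\<^sub>m q)
      (0\<^sub>m q p * Rp + 0\<^sub>m q q * 0\<^sub>m q p) (0\<^sub>m q p * 0\<^sub>m p q + 0\<^sub>m q q * 1\<^sub>m q)"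
    unfolding F_def by (rule mult_four_block_mat[OF RB zero_carrier_mat zero_carrier_mat zero_carrier_mat Rp(1) zero_carrier_mat zero_carrier_mat one_carrier_mat])
  also have "\<dots> = four_block_mat (cong Rp Bp) (0\<^sub>m p q) (0\<^sub>m q p) (0\<^sub>m q q)"
    using RB Rp(1) by (simp add: right_mult_zero_mat)
  finally have cF: "cong F G0 = four_block_mat (cong Rp Bp) (0\<^sub>m p q) (0\<^sub>m q p) (0\<^sub>m q q)" .
  have dF: "diagonal_mat (cong F G0)" unfolding cF
    by (rule diag_four_block0[OF _ Rp(3)]) (use Rp Bp in simp)
  define R where "R = S * F"
  have Rc: "R \<in> carrier_mat n n" unfolding R_def using mult_carrier_mat[OF S(1) Fc] .
  have Rinv: "invertible_mat R" unfolding R_def by (rule inv_mult[OF S(1) Fc S(2) Finv])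
  have "cong R A = cong F G0" unfolding R_def SA[symmetric] by (rule cong_comp[OF S(1) Fc A])
  thus ?thesis unfolding diagonalizable_by_star_congruence_def using Rc Rinv dF A
    by (intro exI[of _ R]) (auto simp: carrier_matD)
qed

theorem mainTheorem5:
  fixes A :: "complex mat" and n :: nat
  assumes "A \<in> carrier_mat n n"
  shows "diagonalizable_by_star_congruence A \<longleftrightarrow>
    (mat_kernel A = mat_kernel (mat_adjoint A) \<and>
     (\<forall>B. regular_part A B \<longrightarrow>
        diagonalizable_mat (cosquare B) \<and> (\<forall>z. eigenvalue (cosquare B) z \<longrightarrow> cmod z = 1)))"
proof
  assume "diagonalizable_by_star_congruence A"
  then obtain R where R: "R \<in> carrier_mat n n" "invertible_mat R" "diagonal_mat (cong R A)"
    unfolding diagonalizable_by_star_congruence_def using assms by (auto simp: carrier_matD)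
  have "mat_kernel A = mat_kernel (mat_adjoint A)"
    unfolding mat_kernel_def using kersym[OF R(1,2) assms R(3)] assms by (auto simp: carrier_matD)
  moreover have "\<forall>B. regular_part A B \<longrightarrow> diagonalizable_mat (cosquare B) \<and> (\<forall>z. eigenvalue (cosquare B) z \<longrightarrow> cmod z = 1)"
    using fwd_b[OF assms R] by blast
  ultimately show "mat_kernel A = mat_kernel (mat_adjoint A) \<and> (\<forall>B. regular_part A B \<longrightarrow>
        diagonalizable_mat (cosquare B) \<and> (\<forall>z. eigenvalue (cosquare B) z \<longrightarrow> cmod z = 1))" by blast
next
  assume h: "mat_kernel A = mat_kernel (mat_adjoint A) \<and> (\<forall>B. regular_part A B \<longrightarrow>
        diagonalizable_mat (cosquare B) \<and> (\<forall>z. eigenvalue (cosquare B) z \<longrightarrow> cmod z = 1))"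
  have ks: "mat_adjoint A *\<^sub>v v = 0\<^sub>v n" if v: "v \<in> carrier_vec n" and Av: "A *\<^sub>v v = 0\<^sub>v n" for v
  proof -
    have "v \<in> mat_kernel A" unfolding mat_kernel_def using v Av assms by (auto simp: carrier_matD)
    hence "v \<in> mat_kernel (mat_adjoint A)" using h by simp
    thus ?thesis unfolding mat_kernel_def using assms by (auto simp: carrier_matD)
  qed
  show "diagonalizable_by_star_congruence A" by (rule bwd[OF assms ks conjunct2[OF h]])
qed

end
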